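(* There is an algorithm which, given a simple LQCA $A=(\Sigma,q,N,\delta)$ with $|N|=r$, decides whether all columns $U_A(\cdot,c)$, $c\in\mathcal C_A$, of its time evolution operator have norm $1$, in time $O(n^2)$ in the algebraic model of computation, where $n=|\Sigma|^{r+1}$.
   Context: A linear quantum cellular automaton (LQCA) is a tuple $A=(\Sigma,q,N,\delta)$ where $\Sigma$ is a finite nonempty set of states, $N=(a_1,\dots,a_r)$ is a strictly increasing sequence of integers, $\delta:\Sigma^r\to\mathbb C^\Sigma$ satisfies $\|\delta(w)\|>0$ for all $w$, and $q\in\Sigma$ satisfies $[\delta(q,\dots,q)](x)=1$ if $x=q$ and $0$ otherwise. It is simple if $a_r-a_1=r-1$. The input is the table of $\delta$. In the algebraic model, complex numbers occupy unit space and arithmetic operations and comparisons take unit time. A configuration is a map $c:\mathbb Z\to\Sigma$ with $c_i\ne q$ for only finitely many $i$; $\mathcal C_A$ is the set of configurations. With $c_{i+N}=(c_{i+a_1},\dots,c_{i+a_r})$, $U_A(d,c)=\prod_{i\in\mathbb Z}[\delta(c_{i+N})](d_i)$, and $U_A(\cdot,c)$ is the column $d\mapsto U_A(d,c)$ in $\ell_2(\mathcal C_A)$. *)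

theory Defs
  imports "HOL-Analysis.Analysis"
begin

text \<open>The state set Sigma is represented as {0..<k} (k = |Sigma|), the quiescent state
  is q < k, the neighbourhood N is a list of integers, and the local rule delta maps a word
  (list of length r = length N over {0..<k}) and a state x < k to a complex amplitude.\<close>

definition words :: "nat \<Rightarrow> nat \<Rightarrow> nat list set" where
  "words k r = {w. length w = r \<and> set w \<subseteq> {..<k}}"

definition lqca :: "nat \<Rightarrow> nat \<Rightarrow> int list \<Rightarrow> (nat list \<Rightarrow> nat \<Rightarrow> complex) \<Rightarrow> bool" where
  "lqca k q N \<delta> \<longleftrightarrow>
     0 < k \<and> q < k \<and> N \<noteq> [] \<and> sorted_wrt (<) N \<and>
     (\<forall>w \<in> words k (length N). (\<Sum>x<k. (cmod (\<delta> w x))\<^sup>2) > 0) \<and>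
     (\<forall>x<k. \<delta> (replicate (length N) q) x = (if x = q then 1 else 0))"

definition simple_lqca :: "nat \<Rightarrow> nat \<Rightarrow> int list \<Rightarrow> (nat list \<Rightarrow> nat \<Rightarrow> complex) \<Rightarrow> bool" where
  "simple_lqca k q N \<delta> \<longleftrightarrow> lqca k q N \<delta> \<and> last N - hd N = int (length N) - 1"

definition configs :: "nat \<Rightarrow> nat \<Rightarrow> (int \<Rightarrow> nat) set" where
  "configs k q = {c. (\<forall>i. c i < k) \<and> finite {i. c i \<noteq> q}}"

definition nbh :: "int list \<Rightarrow> (int \<Rightarrow> nat) \<Rightarrow> int \<Rightarrow> nat list" where
  "nbh N c i = map (\<lambda>a. c (i + a)) N"

text \<open>U_A(d,c) = prod over all i of delta(c_{i+N})(d_i). All factors outside the finite set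
  below equal 1 (there c_{i+N} = q...q and d_i = q), so the infinite product is this finite one.\<close>
definition U :: "nat \<Rightarrow> int list \<Rightarrow> (nat list \<Rightarrow> nat \<Rightarrow> complex) \<Rightarrow> (int \<Rightarrow> nat) \<Rightarrow> (int \<Rightarrow> nat) \<Rightarrow> complex" where
  "U q N \<delta> d c = (\<Prod>i \<in> {i. nbh N c i \<noteq> replicate (length N) q \<or> d i \<noteq> q}. \<delta> (nbh N c i) (d i))"

definition all_columns_unit :: "nat \<Rightarrow> nat \<Rightarrow> int list \<Rightarrow> (nat list \<Rightarrow> nat \<Rightarrow> complex) \<Rightarrow> bool" where
  "all_columns_unit k q N \<delta> \<longleftrightarrow>
     (\<forall>c \<in> configs k q. ((\<lambda>d. (cmod (U q N \<delta> d c))\<^sup>2) has_sum 1) (configs k q))"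

text \<open>Each instruction
  (arithmetic operation, conjugation, constant, indirect load/store, comparison with jump)
  costs one time unit.\<close>

datatype instr =
    Const nat complex
  | Add nat nat nat
  | Sub nat nat nat
  | Mul nat nat nat
  | Dvd nat nat nat
  | Cnj nat nat
  | Load nat nat
  | Store nat nat
  | JmpEq nat nat nat
  | JmpLe nat nat nat
  | Halt

type_synonym state = "nat \<times> (nat \<Rightarrow> complex)"

definition addr :: "complex \<Rightarrow> nat" where
  "addr v = nat \<lfloor>Re v\<rfloor>"

fun exec :: "instr \<Rightarrow> state \<Rightarrow> state" where
  "exec (Const i v) (pc, m) = (Suc pc, m(i := v))"
| "exec (Add i j l) (pc, m) = (Suc pc, m(i := m j + m l))"
| "exec (Sub i j l) (pc, m) = (Suc pc, m(i := m j - m l))"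
| "exec (Mul i j l) (pc, m) = (Suc pc, m(i := m j * m l))"
| "exec (Dvd i j l) (pc, m) = (Suc pc, m(i := m j / m l))"
| "exec (Cnj i j) (pc, m) = (Suc pc, m(i := cnj (m j)))"
| "exec (Load i j) (pc, m) = (Suc pc, m(i := m (addr (m j))))"
| "exec (Store i j) (pc, m) = (Suc pc, m(addr (m i) := m j))"
| "exec (JmpEq i j l) (pc, m) = (if m i = m j then l else Suc pc, m)"
| "exec (JmpLe i j l) (pc, m) = (if Re (m i) \<le> Re (m j) then l else Suc pc, m)"
| "exec Halt (pc, m) = (pc, m)"

definition halted :: "instr list \<Rightarrow> state \<Rightarrow> bool" where
  "halted P s \<longleftrightarrow> length P \<le> fst s \<or> P ! fst s = Halt"

definition step :: "instr list \<Rightarrow> state \<Rightarrow> state" where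
  "step P s = (if halted P s then s else exec (P ! fst s) s)"

definition run :: "instr list \<Rightarrow> state \<Rightarrow> nat \<Rightarrow> state" where
  "run P s t = (step P ^^ t) s"

definition word_index :: "nat \<Rightarrow> nat list \<Rightarrow> nat" where
  "word_index k w = foldl (\<lambda>acc a. acc * k + a) 0 w"

text \<open>Memory layout: m 0 = k, m 1 = r, m 2 = q, m (3+j) = N!j for j < r, and the table of
  delta: entry delta(w)(x) at address 3 + r + word_index k w * k + x. All other cells are 0.\<close>
definition init_mem :: "nat \<Rightarrow> nat \<Rightarrow> int list \<Rightarrow> (nat list \<Rightarrow> nat \<Rightarrow> complex) \<Rightarrow> nat \<Rightarrow> complex" where
  "init_mem k q N \<delta> a =
     (let r = length N in
      if a = 0 then of_nat k
      else if a = 1 then of_nat r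
      else if a = 2 then of_nat q
      else if a < 3 + r then of_int (N ! (a - 3))
      else if (\<exists>w \<in> words k r. \<exists>x<k. a = 3 + r + word_index k w * k + x)
        then (THE z. \<exists>w \<in> words k r. \<exists>x<k. a = 3 + r + word_index k w * k + x \<and> z = \<delta> w x)
      else 0)"

end

theory Submission
  imports Defs "HOL-Library.FuncSet"
begin


lemma sorted_lt_gap:
  fixes xs :: "int list"
  assumes "sorted_wrt (<) xs" "i + d < length xs"
  shows "xs ! (i + d) \<ge> xs ! i + int d"
  using assms(2)
proof (induction d)
  case 0 then show ?case by simp
next
  case (Suc d)
  have "xs ! (i + d) < xs ! (i + Suc d)"
    using assms(1) Suc.prems by (simp add: sorted_wrt_iff_nth_less)
  then show ?case using Suc by simp
qed

lemma consecutive_list: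
  fixes N :: "int list"
  assumes "N \<noteq> []" "sorted_wrt (<) N" "last N - hd N = int (length N) - 1"
  shows "N = map (\<lambda>j. hd N + int j) [0..<length N]"
proof (rule nth_equalityI)
  show "length N = length (map (\<lambda>j. hd N + int j) [0..<length N])" by simp
  fix j assume j: "j < length N"
  have h: "hd N = N ! 0" using assms(1) by (simp add: hd_conv_nth)
  have l: "last N = N ! (length N - 1)" using assms(1) by (simp add: last_conv_nth)
  have a: "N ! j \<ge> N ! 0 + int j" using sorted_lt_gap[OF assms(2), of 0 j] j by simp
  have b: "N ! (j + (length N - 1 - j)) \<ge> N ! j + int (length N - 1 - j)"
    using sorted_lt_gap[OF assms(2), of j "length N - 1 - j"] j by simp
  have c: "j + (length N - 1 - j) = length N - 1" using j by simp
  have "N ! j = hd N + int j" using a b c assms(3) h l j by (simp add: of_nat_diff)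
  then show "N ! j = map (\<lambda>j. hd N + int j) [0..<length N] ! j" using j by simp
qed

definition fw :: "nat \<Rightarrow> (nat list \<Rightarrow> nat \<Rightarrow> complex) \<Rightarrow> nat list \<Rightarrow> real" where
  "fw k \<delta> w = (\<Sum>x<k. (cmod (\<delta> w x))\<^sup>2)"

definition win :: "nat \<Rightarrow> (int \<Rightarrow> nat) \<Rightarrow> int \<Rightarrow> nat list" where
  "win r c i = map (\<lambda>j. c (i + int j)) [0..<r]"

definition Psi :: "nat \<Rightarrow> nat \<Rightarrow> nat \<Rightarrow> (nat list \<Rightarrow> nat \<Rightarrow> complex) \<Rightarrow> (int \<Rightarrow> nat) \<Rightarrow> real" where
  "Psi k q r \<delta> c = (\<Prod>i \<in> {i. win r c i \<noteq> replicate r q}. fw k \<delta> (win r c i))"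

definition cfg :: "nat \<Rightarrow> nat list \<Rightarrow> int \<Rightarrow> nat" where
  "cfg q u i = (if 0 \<le> i \<and> i < int (length u) then u ! nat i else q)"

lemma nbh_win:
  assumes "N = map (\<lambda>j. hd N + int j) [0..<length N]"
  shows "nbh N c i = win (length N) c (i + hd N)"
  unfolding nbh_def win_def by (subst assms) (simp add: algebra_simps)

lemma win_rep_support:
  assumes "win r c i \<noteq> replicate r q"
  shows "\<exists>j<r. c (i + int j) \<noteq> q"
  using assms unfolding win_def by (auto simp: list_eq_iff_nth_eq)

lemma finite_win_support:
  assumes "finite {i. c i \<noteq> q}"
  shows "finite {i. win r c i \<noteq> replicate r q}"
proof -
  have "{i. win r c i \<noteq> replicate r q} \<subseteq> (\<Union>j<r. (\<lambda>x. x - int j) ` {i. c i \<noteq> q})"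
  proof
    fix i assume "i \<in> {i. win r c i \<noteq> replicate r q}"
    then obtain j where "j < r" "c (i + int j) \<noteq> q" using win_rep_support by blast
    then show "i \<in> (\<Union>j<r. (\<lambda>x. x - int j) ` {i. c i \<noteq> q})"
      by (auto intro!: bexI[of _ j] image_eqI[of _ _ "i + int j"])
  qed
  then show ?thesis by (rule finite_subset) (use assms in auto)
qed

lemma fw_rep:
  assumes "lqca k q N \<delta>"
  shows "fw k \<delta> (replicate (length N) q) = 1"
proof -
  have q: "q < k" and d: "\<forall>x<k. \<delta> (replicate (length N) q) x = (if x = q then 1 else 0)"
    using assms unfolding lqca_def by auto
  have "fw k \<delta> (replicate (length N) q) = (\<Sum>x<k. if x = q then 1 else 0)"
    unfolding fw_def by (rule sum.cong) (auto simp: d)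
  also have "\<dots> = 1" using q by simp
  finally show ?thesis .
qed

lemma fw_pos:
  assumes "lqca k q N \<delta>" "w \<in> words k (length N)"
  shows "fw k \<delta> w > 0"
  using assms unfolding lqca_def fw_def by auto

lemma Psi_superset:
  assumes "finite I" "{i. win r c i \<noteq> replicate r q} \<subseteq> I" "fw k \<delta> (replicate r q) = 1"
  shows "Psi k q r \<delta> c = (\<Prod>i\<in>I. fw k \<delta> (win r c i))"
  unfolding Psi_def
  by (rule prod.mono_neutral_left) (use assms in auto)

lemma Psi_shift_nbh:
  assumes Ncons: "N = map (\<lambda>j. hd N + int j) [0..<length N]"
  shows "(\<Prod>i\<in>{i. nbh N c i \<noteq> replicate (length N) q}. fw k \<delta> (nbh N c i)) = Psi k q (length N) \<delta> c"
  unfolding Psi_def nbh_win[OF Ncons]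
  by (rule prod.reindex_bij_witness[of _ "\<lambda>j. j - hd N" "\<lambda>i. i + hd N"]) auto

lemma column_has_sum:
  assumes lq: "lqca k q N \<delta>" and Ncons: "N = map (\<lambda>j. hd N + int j) [0..<length N]"
    and c: "c \<in> configs k q"
  shows "((\<lambda>d. (cmod (U q N \<delta> d c))\<^sup>2) has_sum Psi k q (length N) \<delta> c) (configs k q)"
proof -
  define r where "r = length N"
  define S0 where "S0 = {i. nbh N c i \<noteq> replicate r q}"
  have qk: "q < k" using lq unfolding lqca_def by auto
  have drep: "\<And>x. x < k \<Longrightarrow> \<delta> (replicate r q) x = (if x = q then 1 else 0)"
    using lq unfolding lqca_def r_def by auto
  have finc: "finite {i. c i \<noteq> q}" using c unfolding configs_def by auto
  have finS0: "finite S0"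
  proof -
    have "S0 = (\<lambda>i. i - hd N) ` {i. win r c i \<noteq> replicate r q}"
      unfolding S0_def nbh_win[OF Ncons] r_def
      by (auto simp: image_iff intro!: exI[of _ "_ + hd N"])
    then show ?thesis using finite_win_support[OF finc] by simp
  qed
  define ext where "ext = (\<lambda>g i. if i \<in> S0 then g i else q)"
  define PE where "PE = PiE S0 (\<lambda>_. {..<k})"
  define D where "D = ext ` PE"
  have finPE: "finite PE" unfolding PE_def using finS0 by (intro finite_PiE) auto
  have finD: "finite D" unfolding D_def using finPE by simp
  have injext: "inj_on ext PE"
  proof
    fix g1 g2 assume g: "g1 \<in> PE" "g2 \<in> PE" "ext g1 = ext g2"
    show "g1 = g2"
    proof (rule PiE_ext[OF g(1)[unfolded PE_def] g(2)[unfolded PE_def]])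
      fix i assume "i \<in> S0"
      then show "g1 i = g2 i" using fun_cong[OF g(3), of i] unfolding ext_def by simp
    qed
  qed
  have Dchar: "D = {d. (\<forall>i. d i < k) \<and> (\<forall>i. i \<notin> S0 \<longrightarrow> d i = q)}"
  proof
    show "D \<subseteq> {d. (\<forall>i. d i < k) \<and> (\<forall>i. i \<notin> S0 \<longrightarrow> d i = q)}"
      unfolding D_def PE_def ext_def using qk by (auto simp: PiE_iff)
    show "{d. (\<forall>i. d i < k) \<and> (\<forall>i. i \<notin> S0 \<longrightarrow> d i = q)} \<subseteq> D"
    proof
      fix d assume d: "d \<in> {d. (\<forall>i. d i < k) \<and> (\<forall>i. i \<notin> S0 \<longrightarrow> d i = q)}"
      have "restrict d S0 \<in> PE" using d unfolding PE_def by auto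
      moreover have "ext (restrict d S0) = d" using d unfolding ext_def by auto
      ultimately show "d \<in> D" unfolding D_def by force
    qed
  qed
  have DC: "D \<subseteq> configs k q"
  proof
    fix d assume "d \<in> D"
    then have d: "\<forall>i. d i < k" "\<forall>i. i \<notin> S0 \<longrightarrow> d i = q" using Dchar by auto
    have "{i. d i \<noteq> q} \<subseteq> S0" using d by auto
    then show "d \<in> configs k q" unfolding configs_def using d finS0 finite_subset by auto
  qed
  have Urep: "U q N \<delta> d c = (\<Prod>i\<in>S0. \<delta> (nbh N c i) (d i))" if "d \<in> D" for d
  proof -
    have "{i. nbh N c i \<noteq> replicate (length N) q \<or> d i \<noteq> q} = S0"
      using that Dchar unfolding S0_def r_def by auto
    then show ?thesis unfolding U_def by simp
  qed
  have zero: "(cmod (U q N \<delta> d c))\<^sup>2 = 0" if "d \<in> configs k q - D" for d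
  proof -
    have dk: "\<forall>i. d i < k" and find: "finite {i. d i \<noteq> q}" using that unfolding configs_def by auto
    have "d \<notin> D" using that by simp
    then obtain i where i: "i \<notin> S0" "d i \<noteq> q" unfolding Dchar using dk by auto
    let ?I = "{i. nbh N c i \<noteq> replicate (length N) q \<or> d i \<noteq> q}"
    have "?I \<subseteq> S0 \<union> {i. d i \<noteq> q}" unfolding S0_def r_def by auto
    then have finI: "finite ?I" using finS0 find finite_subset by auto
    have "i \<in> ?I" using i by auto
    moreover have "\<delta> (nbh N c i) (d i) = 0"
      using i dk drep unfolding S0_def by auto
    ultimately have "U q N \<delta> d c = 0" unfolding U_def using finI
      by (intro prod_zero) auto
    then show ?thesis by simp
  qed
  have "(\<Sum>d\<in>D. (cmod (U q N \<delta> d c))\<^sup>2) = (\<Sum>g\<in>PE. (cmod (U q N \<delta> (ext g) c))\<^sup>2)"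
    unfolding D_def using injext by (simp add: sum.reindex)
  also have "\<dots> = (\<Sum>g\<in>PE. \<Prod>i\<in>S0. (cmod (\<delta> (nbh N c i) (g i)))\<^sup>2)"
  proof (rule sum.cong[OF refl])
    fix g assume g: "g \<in> PE"
    have "ext g \<in> D" unfolding D_def using g by simp
    then have "U q N \<delta> (ext g) c = (\<Prod>i\<in>S0. \<delta> (nbh N c i) (g i))"
      using Urep unfolding ext_def by simp
    then show "(cmod (U q N \<delta> (ext g) c))\<^sup>2 = (\<Prod>i\<in>S0. (cmod (\<delta> (nbh N c i) (g i)))\<^sup>2)"
      by (simp add: prod_norm[symmetric] prod_power_distrib)
  qed
  also have "\<dots> = (\<Prod>i\<in>S0. \<Sum>y<k. (cmod (\<delta> (nbh N c i) y))\<^sup>2)"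
    unfolding PE_def by (rule prod_sum_PiE[symmetric]) (use finS0 in auto)
  also have "\<dots> = Psi k q (length N) \<delta> c"
    using Psi_shift_nbh[OF Ncons, where c=c and q=q and k=k and \<delta>=\<delta>] unfolding S0_def r_def fw_def by simp
  finally have sumD: "(\<Sum>d\<in>D. (cmod (U q N \<delta> d c))\<^sup>2) = Psi k q (length N) \<delta> c" .
  show ?thesis
    by (rule has_sum_finite_neutralI[OF finD DC]) (use zero sumD in auto)
qed


lemma telescope_int:
  fixes g :: "int \<Rightarrow> real"
  assumes "\<And>i. g i \<noteq> 0"
  shows "(\<Prod>i\<in>{a..<a + int n}. g (i + 1) / g i) = g (a + int n) / g a"
proof (induction n)
  case 0 then show ?case using assms by simp
next
  case (Suc n)
  have "{a..<a + int (Suc n)} = insert (a + int n) {a..<a + int n}" by auto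
  then have "(\<Prod>i\<in>{a..<a + int (Suc n)}. g (i + 1) / g i)
      = g (a + int n + 1) / g (a + int n) * (\<Prod>i\<in>{a..<a + int n}. g (i + 1) / g i)" by simp
  also have "\<dots> = g (a + int (Suc n)) / g a" using Suc assms by (simp add: algebra_simps)
  finally show ?case .
qed

lemma win_support:
  assumes "\<And>i. i < lo \<or> hi \<le> i \<Longrightarrow> c i = q"
  shows "{i. win r c i \<noteq> replicate r q} \<subseteq> {lo - int r + 1..<hi}"
proof
  fix i assume "i \<in> {i. win r c i \<noteq> replicate r q}"
  then obtain j where j: "j < r" "c (i + int j) \<noteq> q" using win_rep_support by blast
  have "lo \<le> i + int j" using assms j(2) by (meson not_le)
  moreover have "i + int j < hi" using assms j(2) by (meson not_le)
  ultimately show "i \<in> {lo - int r + 1..<hi}" using j by auto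
qed

lemma Psi_shift:
  "Psi k q r \<delta> (\<lambda>i. c (i + s)) = Psi k q r \<delta> c"
proof -
  have w: "win r (\<lambda>i. c (i + s)) i = win r c (i + s)" for i
    unfolding win_def by (simp add: algebra_simps)
  show ?thesis unfolding Psi_def w
    by (rule prod.reindex_bij_witness[of _ "\<lambda>j. j - s" "\<lambda>i. i + s"]) auto
qed

lemma cfg_Cons_q: "cfg q (q # u) = (\<lambda>i. cfg q u (i + (-1)))"
proof
  fix i
  show "cfg q (q # u) i = cfg q u (i + (-1))"
  proof (cases "i = 0")
    case True then show ?thesis unfolding cfg_def by simp
  next
    case False
    then have "i \<ge> 1 \<Longrightarrow> (q # u) ! nat i = u ! nat (i - 1)"
      by (simp add: nat_diff_distrib)
    then show ?thesis unfolding cfg_def using False by auto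
  qed
qed

lemma cfg_words:
  assumes "set u \<subseteq> {..<k}" "q < k"
  shows "cfg q u i < k"
proof (cases "0 \<le> i \<and> i < int (length u)")
  case True
  then have "u ! nat i \<in> set u" by (intro nth_mem) linarith
  then show ?thesis using assms True unfolding cfg_def by auto
qed (use assms in \<open>auto simp: cfg_def\<close>)

lemma win_words:
  assumes "\<And>i. c i < k"
  shows "win r c i \<in> words k r"
  using assms unfolding win_def words_def by auto

lemma cfg_support: "i < 0 \<or> int (length u) \<le> i \<Longrightarrow> cfg q u i = q"
  unfolding cfg_def by auto

lemma ivl_split:
  fixes a b c :: int
  assumes "a \<le> b" "b \<le> c"
  shows "{a..<c} = {a..<b} \<union> {b..<c}" "{a..<b} \<inter> {b..<c} = {}"
  using assms by auto

lemma win_butlast_cfg: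
  assumes "length w = r" "i < 0"
  shows "win r (cfg q w) i = win r (cfg q (butlast w)) i"
  unfolding win_def cfg_def using assms
  by (auto simp: nth_butlast nat_less_iff)

lemma win_tl_cfg:
  assumes "length w = r" "1 \<le> i"
  shows "win r (cfg q w) i = win r (cfg q (tl w)) (i - 1)"
  unfolding win_def cfg_def using assms
  by (auto simp: nth_tl nat_diff_distrib algebra_simps nat_add_distrib)

lemma win_0_cfg:
  assumes "length w = r"
  shows "win r (cfg q w) 0 = w"
  unfolding win_def cfg_def using assms by (auto intro: nth_equalityI)

lemma win_butlast: "butlast (win (Suc r) c i) = win r c i"
  unfolding win_def by (simp add: map_butlast[symmetric])

lemma win_tl: "tl (win (Suc r) c i) = win r c (i + 1)"
  unfolding win_def
  by (simp add: map_tl[symmetric] tl_upt map_Suc_upt[symmetric] del: upt_Suc) (simp add: algebra_simps)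


definition Pp :: "nat \<Rightarrow> nat \<Rightarrow> nat \<Rightarrow> (nat list \<Rightarrow> nat \<Rightarrow> complex) \<Rightarrow> nat list \<Rightarrow> real" where
  "Pp k q r \<delta> u = (\<Prod>i\<in>{- int (r - 1)..<0}. fw k \<delta> (win r (cfg q u) i))"

definition Qq :: "nat \<Rightarrow> nat \<Rightarrow> nat \<Rightarrow> (nat list \<Rightarrow> nat \<Rightarrow> complex) \<Rightarrow> nat list \<Rightarrow> real" where
  "Qq k q r \<delta> u = (\<Prod>i\<in>{0..<int (r - 1)}. fw k \<delta> (win r (cfg q u) i))"

lemma Psi_cfg_word:
  assumes rep: "fw k \<delta> (replicate r q) = 1" and r: "r \<ge> 1" and w: "length w = r"
  shows "Psi k q r \<delta> (cfg q w) = Pp k q r \<delta> (butlast w) * fw k \<delta> w * Qq k q r \<delta> (tl w)"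
proof -
  let ?F = "\<lambda>i. fw k \<delta> (win r (cfg q w) i)"
  have sup: "{i. win r (cfg q w) i \<noteq> replicate r q} \<subseteq> {- int (r - 1)..<int r}"
    using win_support[of 0 "int r" "cfg q w" q r] cfg_support[of _ w q] w r by force
  have "Psi k q r \<delta> (cfg q w) = (\<Prod>i\<in>{- int (r - 1)..<int r}. ?F i)"
    by (rule Psi_superset[OF _ sup rep]) simp
  also have "{- int (r - 1)..<int r} = {- int (r - 1)..<0} \<union> ({0} \<union> {1..<int r})" using r by auto
  also have "(\<Prod>i\<in>{- int (r - 1)..<0} \<union> ({0} \<union> {1..<int r}). ?F i)
      = (\<Prod>i\<in>{- int (r - 1)..<0}. ?F i) * (?F 0 * (\<Prod>i\<in>{1..<int r}. ?F i))"
    by (subst prod.union_disjoint; simp)+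
  also have "(\<Prod>i\<in>{- int (r - 1)..<0}. ?F i) = Pp k q r \<delta> (butlast w)"
    unfolding Pp_def by (rule prod.cong) (use win_butlast_cfg[OF w] in auto)
  also have "?F 0 = fw k \<delta> w" using win_0_cfg[OF w] by simp
  also have "(\<Prod>i\<in>{1..<int r}. ?F i) = (\<Prod>i\<in>{1..<int r}. fw k \<delta> (win r (cfg q (tl w)) (i - 1)))"
    by (rule prod.cong) (use win_tl_cfg[OF w] in auto)
  also have "\<dots> = Qq k q r \<delta> (tl w)"
    unfolding Qq_def using r
    by (intro prod.reindex_bij_witness[of _ "\<lambda>j. j + 1" "\<lambda>i. i - 1"]) auto
  finally show ?thesis by (simp add: mult.assoc)
qed

lemma Psi_cfg_short:
  assumes rep: "fw k \<delta> (replicate r q) = 1" and r: "r \<ge> 1" and u: "length u = r - 1"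
  shows "Psi k q r \<delta> (cfg q u) = Pp k q r \<delta> u * Qq k q r \<delta> u"
proof -
  let ?F = "\<lambda>i. fw k \<delta> (win r (cfg q u) i)"
  have sup: "{i. win r (cfg q u) i \<noteq> replicate r q} \<subseteq> {- int (r - 1)..<int (r - 1)}"
    using win_support[of 0 "int (r - 1)" "cfg q u" q r] cfg_support[of _ u q] u r by force
  have "Psi k q r \<delta> (cfg q u) = (\<Prod>i\<in>{- int (r - 1)..<int (r - 1)}. ?F i)"
    by (rule Psi_superset[OF _ sup rep]) simp
  also have "{- int (r - 1)..<int (r - 1)} = {- int (r - 1)..<0} \<union> {0..<int (r - 1)}" by auto
  also have "(\<Prod>i\<in>{- int (r - 1)..<0} \<union> {0..<int (r - 1)}. ?F i)
      = (\<Prod>i\<in>{- int (r - 1)..<0}. ?F i) * (\<Prod>i\<in>{0..<int (r - 1)}. ?F i)"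
    by (subst prod.union_disjoint; simp)
  finally show ?thesis unfolding Pp_def Qq_def .
qed


lemma finite_int_bound:
  fixes S :: "int set"
  assumes "finite S"
  shows "\<exists>M\<ge>0. \<forall>i\<in>S. - M \<le> i \<and> i < M"
proof -
  define M where "M = Max (insert 0 (abs ` S)) + 1"
  have "\<forall>i\<in>S. \<bar>i\<bar> \<le> Max (insert 0 (abs ` S))" using assms by auto
  moreover have "0 \<le> Max (insert 0 (abs ` S))" using assms by auto
  ultimately show ?thesis unfolding M_def by (intro exI[of _ "Max (insert 0 (abs ` S)) + 1"]) force
qed

lemma cfg_configs:
  assumes "w \<in> words k r" "q < k"
  shows "cfg q w \<in> configs k q"
proof -
  have "\<forall>i. cfg q w i < k" using assms cfg_words[of w k q] unfolding words_def by auto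
  moreover have "{i. cfg q w i \<noteq> q} \<subseteq> {0..<int (length w)}" using cfg_support[of _ w q]
    by (metis (mono_tags, lifting) atLeastLessThan_iff mem_Collect_eq not_le subsetI)
  then have "finite {i. cfg q w i \<noteq> q}" by (rule finite_subset) simp
  ultimately show ?thesis unfolding configs_def by auto
qed

lemma Psi_all_iff:
  assumes lq: "lqca k q N \<delta>" and rN: "r = length N"
  shows "(\<forall>c\<in>configs k q. Psi k q r \<delta> c = 1) \<longleftrightarrow> (\<forall>w\<in>words k r. Psi k q r \<delta> (cfg q w) = 1)"
proof
  have qk: "q < k" using lq unfolding lqca_def by auto
  assume "\<forall>c\<in>configs k q. Psi k q r \<delta> c = 1"
  then show "\<forall>w\<in>words k r. Psi k q r \<delta> (cfg q w) = 1" using cfg_configs[OF _ qk] by blast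
next
  assume H: "\<forall>w\<in>words k r. Psi k q r \<delta> (cfg q w) = 1"
  have qk: "q < k" using lq unfolding lqca_def by auto
  have r1: "r \<ge> 1" using lq rN unfolding lqca_def by (cases N) auto
  then obtain r' where r': "r = Suc r'" by (cases r) auto
  have rep: "fw k \<delta> (replicate r q) = 1" using fw_rep[OF lq] rN by simp
  have fpos: "w \<in> words k r \<Longrightarrow> fw k \<delta> w > 0" for w using fw_pos[OF lq] rN by simp
  have cfgk: "set u \<subseteq> {..<k} \<Longrightarrow> cfg q u i < k" for u i using cfg_words[OF _ qk] by blast
  have Ppos: "Pp k q r \<delta> u > 0" if "u \<in> words k r'" for u
    unfolding Pp_def
  proof (rule prod_pos)
    fix i
    have "\<And>j. cfg q u j < k" using that cfgk unfolding words_def by auto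
    then show "0 < fw k \<delta> (win r (cfg q u) i)" using fpos win_words by blast
  qed
  have PQ: "Pp k q r \<delta> u * Qq k q r \<delta> u = 1" if u: "u \<in> words k r'" for u
  proof -
    have "Pp k q r \<delta> u * Qq k q r \<delta> u = Psi k q r \<delta> (cfg q u)"
      using Psi_cfg_short[OF rep r1] u r' unfolding words_def by simp
    also have "\<dots> = Psi k q r \<delta> (cfg q (q # u))" unfolding cfg_Cons_q Psi_shift ..
    also have "\<dots> = 1" using H u r' qk unfolding words_def by auto
    finally show ?thesis .
  qed
  have fweq: "fw k \<delta> w = Pp k q r \<delta> (tl w) / Pp k q r \<delta> (butlast w)" if w: "w \<in> words k r" for w
  proof -
    have bw: "butlast w \<in> words k r'" "tl w \<in> words k r'" using w r' unfolding words_def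
      by (auto dest: in_set_butlastD list.set_sel(2)[rotated] simp: list.set_sel)
    have "Pp k q r \<delta> (butlast w) * fw k \<delta> w * Qq k q r \<delta> (tl w) = 1"
      using Psi_cfg_word[OF rep r1, of w] H w unfolding words_def by auto
    moreover have "Qq k q r \<delta> (tl w) = 1 / Pp k q r \<delta> (tl w)"
      using PQ[OF bw(2)] Ppos[OF bw(2)] by (simp add: field_simps)
    ultimately show ?thesis using Ppos[OF bw(1)] Ppos[OF bw(2)] by (simp add: field_simps)
  qed
  show "\<forall>c\<in>configs k q. Psi k q r \<delta> c = 1"
  proof
    fix c assume c: "c \<in> configs k q"
    have ck: "\<And>i. c i < k" and finc: "finite {i. c i \<noteq> q}" using c unfolding configs_def by auto
    obtain M where M: "M \<ge> 0" "\<forall>i\<in>{i. c i \<noteq> q}. - M \<le> i \<and> i < M"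
      using finite_int_bound[OF finc] by blast
    have outside: "i < - M \<or> M \<le> i \<Longrightarrow> c i = q" for i using M by force
    let ?g = "\<lambda>i. Pp k q r \<delta> (win r' c i)"
    have gpos: "?g i \<noteq> 0" for i using Ppos[OF win_words[OF ck]] by (simp add: less_imp_neq[symmetric])
    have sup: "{i. win r c i \<noteq> replicate r q} \<subseteq> {- M - int r..<- M - int r + int (nat (2 * M + int r))}"
      using win_support[of "-M" M c q r, OF outside] M by auto
    have "Psi k q r \<delta> c = (\<Prod>i\<in>{- M - int r..<- M - int r + int (nat (2 * M + int r))}. fw k \<delta> (win r c i))"
      by (rule Psi_superset[OF _ sup rep]) simp
    also have "\<dots> = (\<Prod>i\<in>{- M - int r..<- M - int r + int (nat (2 * M + int r))}. ?g (i + 1) / ?g i)"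
    proof (rule prod.cong[OF refl])
      fix i
      have "fw k \<delta> (win r c i) = Pp k q r \<delta> (tl (win r c i)) / Pp k q r \<delta> (butlast (win r c i))"
        by (rule fweq[OF win_words[OF ck]])
      then show "fw k \<delta> (win r c i) = ?g (i + 1) / ?g i" unfolding r' win_tl win_butlast .
    qed
    also have "\<dots> = ?g (- M - int r + int (nat (2 * M + int r))) / ?g (- M - int r)"
      by (rule telescope_int[OF gpos])
    also have "- M - int r + int (nat (2 * M + int r)) = M" using M by simp
    also have "win r' c M = replicate r' q" unfolding win_def using outside
      by (auto intro: nth_equalityI)
    also have "win r' c (- M - int r) = replicate r' q" unfolding win_def using outside r'
      by (auto intro: nth_equalityI)
    finally show "Psi k q r \<delta> c = 1" using gpos[of M] \<open>win r' c M = replicate r' q\<close> by simp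
  qed
qed


definition sw :: "nat \<Rightarrow> nat \<Rightarrow> nat list \<Rightarrow> nat list" where
  "sw q r w = replicate (r - 1) q @ w @ replicate (r - 1) q"

lemma sw_nth:
  assumes "length w = r" "p < 3 * r - 2" "r \<ge> 1"
  shows "sw q r w ! p = (if p < r - 1 then q else if p < 2 * r - 1 then w ! (p - (r - 1)) else q)"
  using assms unfolding sw_def by (auto simp: nth_append)

lemma win_sw:
  assumes w: "length w = r" and j: "j < 2 * r - 1" and r: "r \<ge> 1"
  shows "win r (cfg q w) (int j - int (r - 1)) = take r (drop j (sw q r w))"
proof (rule nth_equalityI)
  have "length (sw q r w) = 3 * r - 2" unfolding sw_def using w r by simp
  then show "length (win r (cfg q w) (int j - int (r - 1))) = length (take r (drop j (sw q r w)))"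
    using j unfolding win_def by simp
  fix t assume "t < length (win r (cfg q w) (int j - int (r - 1)))"
  then have t: "t < r" unfolding win_def by simp
  have "take r (drop j (sw q r w)) ! t = sw q r w ! (j + t)" using t \<open>length (sw q r w) = 3 * r - 2\<close> j
    by simp
  also have "\<dots> = (if j + t < r - 1 then q else if j + t < 2 * r - 1 then w ! (j + t - (r - 1)) else q)"
    by (rule sw_nth) (use w j t r in auto)
  also have "\<dots> = cfg q w (int j - int (r - 1) + int t)"
  proof -
    have e: "j + t \<ge> r - 1 \<Longrightarrow> nat (int j - int (r - 1) + int t) = j + t - (r - 1)" by simp
    show ?thesis unfolding cfg_def using w r e by auto
  qed
  finally show "win r (cfg q w) (int j - int (r - 1)) ! t = take r (drop j (sw q r w)) ! t"
    unfolding win_def using t by simp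
qed

lemma Psi_cfg_sw:
  assumes rep: "fw k \<delta> (replicate r q) = 1" and r: "r \<ge> 1" and w: "length w = r"
  shows "Psi k q r \<delta> (cfg q w) = (\<Prod>j<2 * r - 1. fw k \<delta> (take r (drop j (sw q r w))))"
proof -
  have sup: "{i. win r (cfg q w) i \<noteq> replicate r q} \<subseteq> {- int (r - 1)..<int r}"
    using win_support[of 0 "int r" "cfg q w" q r] cfg_support[of _ w q] w r by force
  have "Psi k q r \<delta> (cfg q w) = (\<Prod>i\<in>{- int (r - 1)..<int r}. fw k \<delta> (win r (cfg q w) i))"
    by (rule Psi_superset[OF _ sup rep]) simp
  also have "\<dots> = (\<Prod>j<2 * r - 1. fw k \<delta> (win r (cfg q w) (int j - int (r - 1))))"
    using r
    by (intro prod.reindex_bij_witness[of _ "\<lambda>i. int i - int (r - 1)" "\<lambda>i. nat (i + int (r - 1))"]) auto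
  also have "\<dots> = (\<Prod>j<2 * r - 1. fw k \<delta> (take r (drop j (sw q r w))))"
    by (rule prod.cong[OF refl]) (use win_sw[OF w _ r] in auto)
  finally show ?thesis .
qed

lemma acu_iff:
  assumes s: "simple_lqca k q N \<delta>"
  shows "all_columns_unit k q N \<delta> \<longleftrightarrow>
    (\<forall>w\<in>words k (length N). (\<Prod>j<2 * length N - 1. fw k \<delta> (take (length N) (drop j (sw q (length N) w)))) = 1)"
proof -
  have lq: "lqca k q N \<delta>" using s unfolding simple_lqca_def by auto
  have Ncons: "N = map (\<lambda>j. hd N + int j) [0..<length N]"
    using s consecutive_list unfolding simple_lqca_def lqca_def by auto
  have r1: "length N \<ge> 1" using lq unfolding lqca_def by (cases N) auto
  have rep: "fw k \<delta> (replicate (length N) q) = 1" using fw_rep[OF lq] .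
  have "all_columns_unit k q N \<delta> \<longleftrightarrow> (\<forall>c\<in>configs k q. Psi k q (length N) \<delta> c = 1)"
    unfolding all_columns_unit_def
    using column_has_sum[OF lq Ncons] has_sum_unique by metis
  also have "\<dots> \<longleftrightarrow> (\<forall>w\<in>words k (length N). Psi k q (length N) \<delta> (cfg q w) = 1)"
    by (rule Psi_all_iff[OF lq refl])
  also have "\<dots> \<longleftrightarrow> (\<forall>w\<in>words k (length N). (\<Prod>j<2 * length N - 1. fw k \<delta> (take (length N) (drop j (sw q (length N) w)))) = 1)"
    using Psi_cfg_sw[OF rep r1] unfolding words_def by simp
  finally show ?thesis .
qed



definition prog :: "instr list" where
  "prog = [
    Dvd 3 0 0,
    JmpEq 0 3 139,
    Const 3 \<i>,
    Mul 3 3 2,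
    Add 1 1 3,
    Const 2 1,
    Const 3 0,
    JmpLe 3 1 9,
    JmpEq 0 0 14,
    Mul 2 2 0,
    Mul 3 3 0,
    Add 3 3 0,
    Dvd 3 3 0,
    JmpEq 0 0 7,
    Sub 1 1 3,
    Add 1 1 0,
    Mul 1 1 0,
    Add 1 1 0,
    Dvd 1 1 0,
    Add 3 3 2,
    Mul 3 3 2,
    Add 3 3 2,
    Dvd 3 3 2,
    Mul 3 3 2,
    Add 3 3 2,
    Dvd 3 3 2,
    Const 0 65,
    Mul 0 0 3,
    Store 0 1,
    Mul 0 0 3,
    Add 0 0 3,
    Dvd 0 0 3,
    Store 0 2,
    Sub 2 3 2,
    JmpLe 3 2 44,
    Load 0 2,
    Const 1 64,
    Mul 1 1 3,
    Add 1 1 2,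
    Store 1 0,
    Mul 2 2 3,
    Add 2 2 3,
    Dvd 2 2 3,
    JmpEq 0 0 34,
    Const 5 0,
    Const 6 1,
    Add 7 3 5,
    Const 0 65,
    Mul 0 0 7,
    Load 1 0,
    Add 0 0 6,
    Load 10 0,
    Cnj 2 1,
    Add 2 2 1,
    Const 3 2,
    Dvd 8 2 3,
    Cnj 2 1,
    Sub 2 1 2,
    Const 3 (2 * \<i>),
    Dvd 9 2 3,
    Const 3 3,
    Sub 11 7 3,
    Sub 11 11 10,
    Const 3 64,
    Mul 12 3 7,
    Sub 2 7 10,
    Add 12 12 2,
    Const 3 66,
    Mul 13 3 7,
    Const 3 67,
    Mul 14 3 7,
    Dvd 15 10 8,
    Sub 18 11 6,
    Add 16 11 11,
    Add 16 16 18,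
    Sub 16 16 6,
    Add 17 11 18,
    Const 19 0,
    JmpLe 15 19 83,
    Add 2 13 19,
    Store 2 19,
    Add 19 19 6,
    JmpEq 0 0 78,
    Const 19 0,
    JmpLe 16 19 89,
    Add 2 14 19,
    Store 2 9,
    Add 19 19 6,
    JmpEq 0 0 84,
    Const 19 0,
    JmpLe 15 19 139,
    Add 20 19 5,
    Add 21 14 17,
    Sub 21 21 6,
    Const 22 0,
    JmpLe 11 22 106,
    Dvd 2 20 8,
    Add 2 2 13,
    Load 23 2,
    Mul 2 23 8,
    Sub 2 20 2,
    Store 21 2,
    Add 20 23 5,
    Sub 21 21 6,
    Add 22 22 6,
    JmpEq 0 0 95,
    Add 25 6 5,
    Const 26 0,
    JmpLe 17 26 134,
    Const 27 0,
    Const 28 0,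
    Add 24 14 26,
    JmpLe 11 28 119,
    Load 2 24,
    Mul 27 27 8,
    Add 27 27 2,
    Add 24 24 6,
    Add 28 28 6,
    JmpEq 0 0 112,
    Mul 31 27 8,
    Add 31 31 12,
    Const 29 0,
    Const 30 0,
    JmpLe 8 30 131,
    Add 2 31 30,
    Load 2 2,
    Cnj 3 2,
    Mul 2 2 3,
    Add 29 29 2,
    Add 30 30 6,
    JmpEq 0 0 123,
    Mul 25 25 29,
    Add 26 26 6,
    JmpEq 0 0 108,
    JmpEq 25 6 137,
    Const 0 0,
    Halt,
    Add 19 19 6,
    JmpEq 0 0 90,
    Const 0 1,
    Halt]"

lemma prog_0: "prog ! 0 = Dvd 3 0 0" by (simp add: prog_def)
lemma prog_1: "prog ! 1 = JmpEq 0 3 139" by (simp add: prog_def)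
lemma prog_2: "prog ! 2 = Const 3 \<i>" by (simp add: prog_def)
lemma prog_3: "prog ! 3 = Mul 3 3 2" by (simp add: prog_def)
lemma prog_4: "prog ! 4 = Add 1 1 3" by (simp add: prog_def)
lemma prog_5: "prog ! 5 = Const 2 1" by (simp add: prog_def)
lemma prog_6: "prog ! 6 = Const 3 0" by (simp add: prog_def)
lemma prog_7: "prog ! 7 = JmpLe 3 1 9" by (simp add: prog_def)
lemma prog_8: "prog ! 8 = JmpEq 0 0 14" by (simp add: prog_def)
lemma prog_9: "prog ! 9 = Mul 2 2 0" by (simp add: prog_def)
lemma prog_10: "prog ! 10 = Mul 3 3 0" by (simp add: prog_def)
lemma prog_11: "prog ! 11 = Add 3 3 0" by (simp add: prog_def)
lemma prog_12: "prog ! 12 = Dvd 3 3 0" by (simp add: prog_def)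
lemma prog_13: "prog ! 13 = JmpEq 0 0 7" by (simp add: prog_def)
lemma prog_14: "prog ! 14 = Sub 1 1 3" by (simp add: prog_def)
lemma prog_15: "prog ! 15 = Add 1 1 0" by (simp add: prog_def)
lemma prog_16: "prog ! 16 = Mul 1 1 0" by (simp add: prog_def)
lemma prog_17: "prog ! 17 = Add 1 1 0" by (simp add: prog_def)
lemma prog_18: "prog ! 18 = Dvd 1 1 0" by (simp add: prog_def)
lemma prog_19: "prog ! 19 = Add 3 3 2" by (simp add: prog_def)
lemma prog_20: "prog ! 20 = Mul 3 3 2" by (simp add: prog_def)
lemma prog_21: "prog ! 21 = Add 3 3 2" by (simp add: prog_def)
lemma prog_22: "prog ! 22 = Dvd 3 3 2" by (simp add: prog_def)
lemma prog_23: "prog ! 23 = Mul 3 3 2" by (simp add: prog_def)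
lemma prog_24: "prog ! 24 = Add 3 3 2" by (simp add: prog_def)
lemma prog_25: "prog ! 25 = Dvd 3 3 2" by (simp add: prog_def)
lemma prog_26: "prog ! 26 = Const 0 65" by (simp add: prog_def)
lemma prog_27: "prog ! 27 = Mul 0 0 3" by (simp add: prog_def)
lemma prog_28: "prog ! 28 = Store 0 1" by (simp add: prog_def)
lemma prog_29: "prog ! 29 = Mul 0 0 3" by (simp add: prog_def)
lemma prog_30: "prog ! 30 = Add 0 0 3" by (simp add: prog_def)
lemma prog_31: "prog ! 31 = Dvd 0 0 3" by (simp add: prog_def)
lemma prog_32: "prog ! 32 = Store 0 2" by (simp add: prog_def)
lemma prog_33: "prog ! 33 = Sub 2 3 2" by (simp add: prog_def)
lemma prog_34: "prog ! 34 = JmpLe 3 2 44" by (simp add: prog_def)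
lemma prog_35: "prog ! 35 = Load 0 2" by (simp add: prog_def)
lemma prog_36: "prog ! 36 = Const 1 64" by (simp add: prog_def)
lemma prog_37: "prog ! 37 = Mul 1 1 3" by (simp add: prog_def)
lemma prog_38: "prog ! 38 = Add 1 1 2" by (simp add: prog_def)
lemma prog_39: "prog ! 39 = Store 1 0" by (simp add: prog_def)
lemma prog_40: "prog ! 40 = Mul 2 2 3" by (simp add: prog_def)
lemma prog_41: "prog ! 41 = Add 2 2 3" by (simp add: prog_def)
lemma prog_42: "prog ! 42 = Dvd 2 2 3" by (simp add: prog_def)
lemma prog_43: "prog ! 43 = JmpEq 0 0 34" by (simp add: prog_def)
lemma prog_44: "prog ! 44 = Const 5 0" by (simp add: prog_def)
lemma prog_45: "prog ! 45 = Const 6 1" by (simp add: prog_def)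
lemma prog_46: "prog ! 46 = Add 7 3 5" by (simp add: prog_def)
lemma prog_47: "prog ! 47 = Const 0 65" by (simp add: prog_def)
lemma prog_48: "prog ! 48 = Mul 0 0 7" by (simp add: prog_def)
lemma prog_49: "prog ! 49 = Load 1 0" by (simp add: prog_def)
lemma prog_50: "prog ! 50 = Add 0 0 6" by (simp add: prog_def)
lemma prog_51: "prog ! 51 = Load 10 0" by (simp add: prog_def)
lemma prog_52: "prog ! 52 = Cnj 2 1" by (simp add: prog_def)
lemma prog_53: "prog ! 53 = Add 2 2 1" by (simp add: prog_def)
lemma prog_54: "prog ! 54 = Const 3 2" by (simp add: prog_def)
lemma prog_55: "prog ! 55 = Dvd 8 2 3" by (simp add: prog_def)
lemma prog_56: "prog ! 56 = Cnj 2 1" by (simp add: prog_def)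
lemma prog_57: "prog ! 57 = Sub 2 1 2" by (simp add: prog_def)
lemma prog_58: "prog ! 58 = Const 3 (2 * \<i>)" by (simp add: prog_def)
lemma prog_59: "prog ! 59 = Dvd 9 2 3" by (simp add: prog_def)
lemma prog_60: "prog ! 60 = Const 3 3" by (simp add: prog_def)
lemma prog_61: "prog ! 61 = Sub 11 7 3" by (simp add: prog_def)
lemma prog_62: "prog ! 62 = Sub 11 11 10" by (simp add: prog_def)
lemma prog_63: "prog ! 63 = Const 3 64" by (simp add: prog_def)
lemma prog_64: "prog ! 64 = Mul 12 3 7" by (simp add: prog_def)
lemma prog_65: "prog ! 65 = Sub 2 7 10" by (simp add: prog_def)
lemma prog_66: "prog ! 66 = Add 12 12 2" by (simp add: prog_def)
lemma prog_67: "prog ! 67 = Const 3 66" by (simp add: prog_def)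
lemma prog_68: "prog ! 68 = Mul 13 3 7" by (simp add: prog_def)
lemma prog_69: "prog ! 69 = Const 3 67" by (simp add: prog_def)
lemma prog_70: "prog ! 70 = Mul 14 3 7" by (simp add: prog_def)
lemma prog_71: "prog ! 71 = Dvd 15 10 8" by (simp add: prog_def)
lemma prog_72: "prog ! 72 = Sub 18 11 6" by (simp add: prog_def)
lemma prog_73: "prog ! 73 = Add 16 11 11" by (simp add: prog_def)
lemma prog_74: "prog ! 74 = Add 16 16 18" by (simp add: prog_def)
lemma prog_75: "prog ! 75 = Sub 16 16 6" by (simp add: prog_def)
lemma prog_76: "prog ! 76 = Add 17 11 18" by (simp add: prog_def)
lemma prog_77: "prog ! 77 = Const 19 0" by (simp add: prog_def)
lemma prog_78: "prog ! 78 = JmpLe 15 19 83" by (simp add: prog_def)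
lemma prog_79: "prog ! 79 = Add 2 13 19" by (simp add: prog_def)
lemma prog_80: "prog ! 80 = Store 2 19" by (simp add: prog_def)
lemma prog_81: "prog ! 81 = Add 19 19 6" by (simp add: prog_def)
lemma prog_82: "prog ! 82 = JmpEq 0 0 78" by (simp add: prog_def)
lemma prog_83: "prog ! 83 = Const 19 0" by (simp add: prog_def)
lemma prog_84: "prog ! 84 = JmpLe 16 19 89" by (simp add: prog_def)
lemma prog_85: "prog ! 85 = Add 2 14 19" by (simp add: prog_def)
lemma prog_86: "prog ! 86 = Store 2 9" by (simp add: prog_def)
lemma prog_87: "prog ! 87 = Add 19 19 6" by (simp add: prog_def)
lemma prog_88: "prog ! 88 = JmpEq 0 0 84" by (simp add: prog_def)
lemma prog_89: "prog ! 89 = Const 19 0" by (simp add: prog_def)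
lemma prog_90: "prog ! 90 = JmpLe 15 19 139" by (simp add: prog_def)
lemma prog_91: "prog ! 91 = Add 20 19 5" by (simp add: prog_def)
lemma prog_92: "prog ! 92 = Add 21 14 17" by (simp add: prog_def)
lemma prog_93: "prog ! 93 = Sub 21 21 6" by (simp add: prog_def)
lemma prog_94: "prog ! 94 = Const 22 0" by (simp add: prog_def)
lemma prog_95: "prog ! 95 = JmpLe 11 22 106" by (simp add: prog_def)
lemma prog_96: "prog ! 96 = Dvd 2 20 8" by (simp add: prog_def)
lemma prog_97: "prog ! 97 = Add 2 2 13" by (simp add: prog_def)
lemma prog_98: "prog ! 98 = Load 23 2" by (simp add: prog_def)
lemma prog_99: "prog ! 99 = Mul 2 23 8" by (simp add: prog_def)
lemma prog_100: "prog ! 100 = Sub 2 20 2" by (simp add: prog_def)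
lemma prog_101: "prog ! 101 = Store 21 2" by (simp add: prog_def)
lemma prog_102: "prog ! 102 = Add 20 23 5" by (simp add: prog_def)
lemma prog_103: "prog ! 103 = Sub 21 21 6" by (simp add: prog_def)
lemma prog_104: "prog ! 104 = Add 22 22 6" by (simp add: prog_def)
lemma prog_105: "prog ! 105 = JmpEq 0 0 95" by (simp add: prog_def)
lemma prog_106: "prog ! 106 = Add 25 6 5" by (simp add: prog_def)
lemma prog_107: "prog ! 107 = Const 26 0" by (simp add: prog_def)
lemma prog_108: "prog ! 108 = JmpLe 17 26 134" by (simp add: prog_def)
lemma prog_109: "prog ! 109 = Const 27 0" by (simp add: prog_def)
lemma prog_110: "prog ! 110 = Const 28 0" by (simp add: prog_def)
lemma prog_111: "prog ! 111 = Add 24 14 26" by (simp add: prog_def)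
lemma prog_112: "prog ! 112 = JmpLe 11 28 119" by (simp add: prog_def)
lemma prog_113: "prog ! 113 = Load 2 24" by (simp add: prog_def)
lemma prog_114: "prog ! 114 = Mul 27 27 8" by (simp add: prog_def)
lemma prog_115: "prog ! 115 = Add 27 27 2" by (simp add: prog_def)
lemma prog_116: "prog ! 116 = Add 24 24 6" by (simp add: prog_def)
lemma prog_117: "prog ! 117 = Add 28 28 6" by (simp add: prog_def)
lemma prog_118: "prog ! 118 = JmpEq 0 0 112" by (simp add: prog_def)
lemma prog_119: "prog ! 119 = Mul 31 27 8" by (simp add: prog_def)
lemma prog_120: "prog ! 120 = Add 31 31 12" by (simp add: prog_def)
lemma prog_121: "prog ! 121 = Const 29 0" by (simp add: prog_def)
lemma prog_122: "prog ! 122 = Const 30 0" by (simp add: prog_def)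
lemma prog_123: "prog ! 123 = JmpLe 8 30 131" by (simp add: prog_def)
lemma prog_124: "prog ! 124 = Add 2 31 30" by (simp add: prog_def)
lemma prog_125: "prog ! 125 = Load 2 2" by (simp add: prog_def)
lemma prog_126: "prog ! 126 = Cnj 3 2" by (simp add: prog_def)
lemma prog_127: "prog ! 127 = Mul 2 2 3" by (simp add: prog_def)
lemma prog_128: "prog ! 128 = Add 29 29 2" by (simp add: prog_def)
lemma prog_129: "prog ! 129 = Add 30 30 6" by (simp add: prog_def)
lemma prog_130: "prog ! 130 = JmpEq 0 0 123" by (simp add: prog_def)
lemma prog_131: "prog ! 131 = Mul 25 25 29" by (simp add: prog_def)
lemma prog_132: "prog ! 132 = Add 26 26 6" by (simp add: prog_def)
lemma prog_133: "prog ! 133 = JmpEq 0 0 108" by (simp add: prog_def)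
lemma prog_134: "prog ! 134 = JmpEq 25 6 137" by (simp add: prog_def)
lemma prog_135: "prog ! 135 = Const 0 0" by (simp add: prog_def)
lemma prog_136: "prog ! 136 = Halt" by (simp add: prog_def)
lemma prog_137: "prog ! 137 = Add 19 19 6" by (simp add: prog_def)
lemma prog_138: "prog ! 138 = JmpEq 0 0 90" by (simp add: prog_def)
lemma prog_139: "prog ! 139 = Const 0 1" by (simp add: prog_def)
lemma prog_140: "prog ! 140 = Halt" by (simp add: prog_def)

lemmas prog_code = prog_0 prog_1 prog_2 prog_3 prog_4 prog_5 prog_6 prog_7 prog_8 prog_9 prog_10 prog_11 prog_12 prog_13 prog_14 prog_15 prog_16 prog_17 prog_18 prog_19 prog_20 prog_21 prog_22 prog_23 prog_24 prog_25 prog_26 prog_27 prog_28 prog_29 prog_30 prog_31 prog_32 prog_33 prog_34 prog_35 prog_36 prog_37 prog_38 prog_39 prog_40 prog_41 prog_42 prog_43 prog_44 prog_45 prog_46 prog_47 prog_48 prog_49 prog_50 prog_51 prog_52 prog_53 prog_54 prog_55 prog_56 prog_57 prog_58 prog_59 prog_60 prog_61 prog_62 prog_63 prog_64 prog_65 prog_66 prog_67 prog_68 prog_69 prog_70 prog_71 prog_72 prog_73 prog_74 prog_75 prog_76 prog_77 prog_78 prog_79 prog_80 prog_81 prog_82 prog_83 prog_84 prog_85 prog_86 prog_87 prog_88 prog_89 prog_90 prog_91 prog_92 prog_93 prog_94 prog_95 prog_96 prog_97 prog_98 prog_99 prog_100 prog_101 prog_102 prog_103 prog_104 prog_105 prog_106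 prog_107 prog_108 prog_109 prog_110 prog_111 prog_112 prog_113 prog_114 prog_115 prog_116 prog_117 prog_118 prog_119 prog_120 prog_121 prog_122 prog_123 prog_124 prog_125 prog_126 prog_127 prog_128 prog_129 prog_130 prog_131 prog_132 prog_133 prog_134 prog_135 prog_136 prog_137 prog_138 prog_139 prog_140

lemma prog_len: "length prog = 141" by (simp add: prog_def)





lemma run_Suc: "run P s (Suc t) = run P (step P s) t"
  unfolding run_def funpow_Suc_right by simp

lemma run_add: "run P s (a + b) = run P (run P s a) b"
  unfolding run_def by (metis add.commute comp_apply funpow_add)

lemma step_halted: "halted P s \<Longrightarrow> step P s = s"
  unfolding step_def by simp

lemma run_halted: "halted P s \<Longrightarrow> run P s t = s"
  by (induction t) (auto simp: run_Suc step_halted run_def)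

definition reach :: "instr list \<Rightarrow> state \<Rightarrow> (state \<Rightarrow> bool) \<Rightarrow> nat \<Rightarrow> bool" where
  "reach P s Q B \<longleftrightarrow> (\<exists>t\<le>B. Q (run P s t))"

lemma reach_now: "Q s \<Longrightarrow> reach P s Q B"
  unfolding reach_def by (rule exI[of _ 0]) (simp add: run_def)

lemma reach_step: "reach P (step P s) Q B \<Longrightarrow> reach P s Q (Suc B)"
  unfolding reach_def by (metis Suc_le_mono run_Suc)

lemma reach_step_num: "reach P (step P s) Q (pred_numeral n) \<Longrightarrow> reach P s Q (numeral n)"
  using reach_step[of P s Q "pred_numeral n"] by (simp add: numeral_eq_Suc)

lemma reach_mono: "reach P s Q B \<Longrightarrow> B \<le> B' \<Longrightarrow> (\<And>s. Q s \<Longrightarrow> Q' s) \<Longrightarrow> reach P s Q' B'"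
  unfolding reach_def by (meson order_trans)

lemma reach_seq: "reach P s Q1 B1 \<Longrightarrow> (\<And>s'. Q1 s' \<Longrightarrow> reach P s' Q2 B2) \<Longrightarrow> reach P s Q2 (B1 + B2)"
  unfolding reach_def by (metis add_le_mono run_add)

lemma loop_rule:
  assumes body: "\<And>i m. i < n \<Longrightarrow> I i m \<Longrightarrow> reach P (L, m) (\<lambda>s. (fst s = L \<and> I (Suc i) (snd s)) \<or> Q s) c"
    and ex: "\<And>m. I n m \<Longrightarrow> reach P (L, m) Q d"
  shows "I i m \<Longrightarrow> i \<le> n \<Longrightarrow> reach P (L, m) Q ((n - i) * c + d)"
proof (induction "n - i" arbitrary: i m)
  case 0
  then have "i = n" by simp
  then show ?case using ex 0 by simp
next
  case (Suc x)
  then have i: "i < n" by simp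
  have "reach P (L, m) Q (c + (x * c + d))"
  proof (rule reach_seq[OF body[OF i Suc.prems(1)]])
    fix s' assume "fst s' = L \<and> I (Suc i) (snd s') \<or> Q s'"
    then show "reach P s' Q (x * c + d)"
    proof
      assume a: "fst s' = L \<and> I (Suc i) (snd s')"
      have "reach P (L, snd s') Q ((n - Suc i) * c + d)"
        by (rule Suc.hyps(1)) (use Suc a in auto)
      moreover have "n - Suc i = x" using Suc.hyps(2) by simp
      ultimately show ?thesis using a by (cases s') auto
    qed (rule reach_now)
  qed
  moreover have "(n - i) * c + d = c + (x * c + d)" by (simp add: Suc.hyps(2)[symmetric])
  ultimately show ?case by (metis add.assoc)
qed

lemma addr_of_nat[simp]: "addr (of_nat n) = n"
  unfolding addr_def by simp

lemma addr_of_nat_add[simp]: "addr (of_nat a + of_nat b) = a + b"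
  unfolding addr_def by simp

lemma addr_add_nat[simp]: "0 \<le> Re x \<Longrightarrow> addr (x + of_nat b) = addr x + b"
  unfolding addr_def by (simp add: nat_add_distrib)

lemma addr_div: "k > 0 \<Longrightarrow> addr (of_nat x / of_nat k + of_nat b) = x div k + b"
proof -
  assume k: "k > 0"
  have "Re (of_nat x / of_nat k + of_nat b) = real x / real k + real b"
    by (simp add: Re_divide_of_nat)
  moreover have "\<lfloor>real x / real k + real b\<rfloor> = int (x div k) + int b"
    by (simp add: floor_divide_of_nat_eq)
  ultimately show ?thesis unfolding addr_def by simp
qed

lemmas step_simps = step_def halted_def prog_len prog_code


lemma word_index_snoc: "word_index k (xs @ [a]) = word_index k xs * k + a"
  unfolding word_index_def by simp

lemma take_Suc_drop: "j + i < length S \<Longrightarrow> take (Suc i) (drop j S) = take i (drop j S) @ [S ! (j + i)]"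
  by (simp add: take_Suc_conv_app_nth)

definition inv8 where
  "inv8 m0 k SB j S i m \<longleftrightarrow> m 28 = of_nat i \<and> m 27 = of_nat (word_index k (take i (drop j S)))
     \<and> m 24 = of_nat (SB + j + i) \<and> (\<forall>a. a \<notin> {2,24,27,28} \<longrightarrow> m a = m0 a)"

lemma L8_body:
  assumes i: "i < r" and js: "j + r \<le> length S"
    and m0: "m0 11 = of_nat r" "m0 8 = of_nat k" "m0 6 = 1" "\<forall>p<length S. m0 (SB + p) = of_nat (S ! p)" "SB \<ge> 32"
    and inv: "inv8 m0 k SB j S i m"
  shows "reach prog (112, m) (\<lambda>s. fst s = 112 \<and> inv8 m0 k SB j S (Suc i) (snd s)) (Suc (Suc (Suc (Suc (Suc (Suc (Suc 0)))))))"
proof -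
  have f: "m 28 = of_nat i" "m 27 = of_nat (word_index k (take i (drop j S)))"
     "m 24 = of_nat (SB + j + i)" "\<forall>a. a \<notin> {2,24,27,28} \<longrightarrow> m a = m0 a"
    using inv unfolding inv8_def by auto
  have g: "m 11 = of_nat r" "m 8 = of_nat k" "m 6 = 1" using f(4) m0 by auto
  have ni: "\<not> r \<le> i" using i by simp
  have h: "m (SB + j + i) = of_nat (S ! (j + i))" using f(4) m0 i js by (auto simp: add.assoc)
  show ?thesis
    apply (rule reach_step, simp add: step_simps f g h i ni)+
    apply (rule reach_now)
    using i js f
    apply (simp add: inv8_def take_Suc_drop word_index_snoc)
    done
qed


lemma L8_exit:
  assumes m0: "m0 11 = of_nat r" and inv: "inv8 m0 k SB j S r m"
  shows "reach prog (112, m) (\<lambda>s. fst s = 119 \<and> inv8 m0 k SB j S r (snd s)) (Suc 0)"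
proof -
  have g: "m 11 = of_nat r" "m 28 = of_nat r" using inv m0 unfolding inv8_def by auto
  show ?thesis
    apply (rule reach_step, simp add: step_simps g)
    apply (rule reach_now) using inv by simp
qed

lemma L8_loop:
  assumes js: "j + r \<le> length S"
    and m0: "m0 11 = of_nat r" "m0 8 = of_nat k" "m0 6 = 1" "\<forall>p<length S. m0 (SB + p) = of_nat (S ! p)" "SB \<ge> 32"
    and inv: "inv8 m0 k SB j S 0 m"
  shows "reach prog (112, m) (\<lambda>s. fst s = 119 \<and> inv8 m0 k SB j S r (snd s)) (r * 7 + 1)"
proof -
  have "reach prog (112, m) (\<lambda>s. fst s = 119 \<and> inv8 m0 k SB j S r (snd s)) ((r - 0) * Suc (Suc (Suc (Suc (Suc (Suc (Suc 0)))))) + Suc 0)"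
  proof (rule loop_rule[where I = "inv8 m0 k SB j S" and n = r])
    fix i m assume a: "i < r" "inv8 m0 k SB j S i m"
    have "reach prog (112, m) (\<lambda>s. fst s = 112 \<and> inv8 m0 k SB j S (Suc i) (snd s)) (Suc (Suc (Suc (Suc (Suc (Suc (Suc 0)))))))"
      by (rule L8_body[OF a(1) js m0 a(2)])
    then show "reach prog (112, m) (\<lambda>s. fst s = 112 \<and> inv8 m0 k SB j S (Suc i) (snd s) \<or> fst s = 119 \<and> inv8 m0 k SB j S r (snd s)) (Suc (Suc (Suc (Suc (Suc (Suc (Suc 0)))))))"
      by (rule reach_mono) auto
  next
    fix m assume a: "inv8 m0 k SB j S r m"
    show "reach prog (112, m) (\<lambda>s. fst s = 119 \<and> inv8 m0 k SB j S r (snd s)) (Suc 0)"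
      by (rule L8_exit[OF _ a, OF m0(1)])
  qed (use inv in auto)
  then show ?thesis by (rule reach_mono) auto
qed

definition inv9 :: "(nat list \<Rightarrow> nat \<Rightarrow> complex) \<Rightarrow> (nat \<Rightarrow> complex) \<Rightarrow> nat list \<Rightarrow> nat \<Rightarrow> (nat \<Rightarrow> complex) \<Rightarrow> bool" where
  "inv9 \<delta> m0 v x m \<longleftrightarrow> m 30 = of_nat x \<and> m 29 = (\<Sum>y<x. \<delta> v y * cnj (\<delta> v y))
     \<and> (\<forall>a. a \<notin> {2,3,29,30} \<longrightarrow> m a = m0 a)"

lemma L9_body:
  assumes i: "x < k"
    and m0: "m0 8 = of_nat k" "m0 6 = 1" "m0 31 = of_nat base" "\<forall>y<k. m0 (base + y) = \<delta> v y" "base \<ge> 32"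
    and inv: "inv9 \<delta> m0 v x m"
  shows "reach prog (123, m) (\<lambda>s. fst s = 123 \<and> inv9 \<delta> m0 v (Suc x) (snd s)) (Suc (Suc (Suc (Suc (Suc (Suc (Suc (Suc 0))))))))"
proof -
  have f: "m 30 = of_nat x" "m 29 = (\<Sum>y<x. \<delta> v y * cnj (\<delta> v y))"
     "\<forall>a. a \<notin> {2,3,29,30} \<longrightarrow> m a = m0 a"
    using inv unfolding inv9_def by auto
  have g: "m 8 = of_nat k" "m 6 = 1" "m 31 = of_nat base" using f(3) m0 by auto
  have ni: "\<not> k \<le> x" using i by simp
  have h: "m (base + x) = \<delta> v x" using f(3) m0 i by auto
  have ne: "base + x \<noteq> 2" using m0(5) by simp
  show ?thesis
    apply (rule reach_step, simp add: step_simps f g h i ni ne)+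
    apply (rule reach_now)
    using i f
    apply (simp add: inv9_def)
    done
qed

lemma L9_exit:
  assumes m0: "m0 8 = of_nat k" and inv: "inv9 \<delta> m0 v k m"
  shows "reach prog (123, m) (\<lambda>s. fst s = 131 \<and> inv9 \<delta> m0 v k (snd s)) (Suc 0)"
proof -
  have g: "m 8 = of_nat k" "m 30 = of_nat k" using inv m0 unfolding inv9_def by auto
  show ?thesis
    apply (rule reach_step, simp add: step_simps g)
    apply (rule reach_now) using inv by simp
qed

lemma L9_loop:
  assumes m0: "m0 8 = of_nat k" "m0 6 = 1" "m0 31 = of_nat base" "\<forall>y<k. m0 (base + y) = \<delta> v y" "base \<ge> 32"
    and inv: "inv9 \<delta> m0 v 0 m"
  shows "reach prog (123, m) (\<lambda>s. fst s = 131 \<and> inv9 \<delta> m0 v k (snd s)) (k * 8 + 1)"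
proof -
  have "reach prog (123, m) (\<lambda>s. fst s = 131 \<and> inv9 \<delta> m0 v k (snd s)) ((k - 0) * Suc (Suc (Suc (Suc (Suc (Suc (Suc (Suc 0))))))) + Suc 0)"
  proof (rule loop_rule[where I = "inv9 \<delta> m0 v" and n = k])
    fix i m assume a: "i < k" "inv9 \<delta> m0 v i m"
    have "reach prog (123, m) (\<lambda>s. fst s = 123 \<and> inv9 \<delta> m0 v (Suc i) (snd s)) (Suc (Suc (Suc (Suc (Suc (Suc (Suc (Suc 0))))))))"
      by (rule L9_body[OF a(1) m0 a(2)])
    then show "reach prog (123, m) (\<lambda>s. fst s = 123 \<and> inv9 \<delta> m0 v (Suc i) (snd s) \<or> fst s = 131 \<and> inv9 \<delta> m0 v k (snd s)) (Suc (Suc (Suc (Suc (Suc (Suc (Suc (Suc 0))))))))"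
      by (rule reach_mono) auto
  next
    fix m assume a: "inv9 \<delta> m0 v k m"
    show "reach prog (123, m) (\<lambda>s. fst s = 131 \<and> inv9 \<delta> m0 v k (snd s)) (Suc 0)"
      by (rule L9_exit[OF _ a, OF m0(1)])
  qed (use inv in auto)
  then show ?thesis by (rule reach_mono) auto
qed


definition fr :: "nat set \<Rightarrow> (nat \<Rightarrow> complex) \<Rightarrow> (nat \<Rightarrow> complex) \<Rightarrow> bool" where
  "fr A m m' \<longleftrightarrow> (\<forall>a. a \<notin> A \<longrightarrow> m' a = m a)"

lemma fr_trans: "fr A m m' \<Longrightarrow> fr B m' m'' \<Longrightarrow> A \<union> B \<subseteq> C \<Longrightarrow> fr C m m''"
  unfolding fr_def
proof (intro allI impI)
  fix a assume h: "\<forall>a. a \<notin> A \<longrightarrow> m' a = m a" "\<forall>a. a \<notin> B \<longrightarrow> m'' a = m' a" "A \<union> B \<subseteq> C" "a \<notin> C"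
  then have "a \<notin> A" "a \<notin> B" by auto
  then show "m'' a = m a" using h(1,2) by simp
qed

lemma fr_refl: "fr A m m"
  unfolding fr_def by auto

lemma word_index_Nil[simp]: "word_index k [] = 0"
  unfolding word_index_def by simp

definition inv7 :: "(nat list \<Rightarrow> nat \<Rightarrow> complex) \<Rightarrow> nat \<Rightarrow> nat \<Rightarrow> (nat \<Rightarrow> complex) \<Rightarrow> nat list \<Rightarrow> nat \<Rightarrow> (nat \<Rightarrow> complex) \<Rightarrow> bool" where
  "inv7 \<delta> k r m0 S J m \<longleftrightarrow> m 26 = of_nat J \<and> m 25 = of_real (\<Prod>j<J. fw k \<delta> (take r (drop j S)))
     \<and> fr {2,3,24,25,26,27,28,29,30,31} m0 m"

lemma sum_cnj_fw: "(\<Sum>y<k. \<delta> v y * cnj (\<delta> v y)) = of_real (fw k \<delta> v)"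
  unfolding fw_def of_real_sum
proof (rule sum.cong[OF refl])
  fix y show "\<delta> v y * cnj (\<delta> v y) = of_real ((cmod (\<delta> v y))\<^sup>2)"
    by (rule complex_norm_square[symmetric])
qed

lemma L7_body:
  assumes J: "J < 2 * r - 1" and r: "r \<ge> 1" and S: "length S = 3 * r - 2" "set S \<subseteq> {..<k}"
    and m0: "m0 17 = of_nat (2 * r - 1)" "m0 14 = of_nat SB" "m0 11 = of_nat r" "m0 8 = of_nat k" "m0 6 = 1"
      "m0 12 = of_nat TB" "\<forall>p<length S. m0 (SB + p) = of_nat (S ! p)" "SB \<ge> 32" "TB \<ge> 32"
      "\<forall>w\<in>words k r. \<forall>x<k. m0 (TB + word_index k w * k + x) = \<delta> w x"
    and inv: "inv7 \<delta> k r m0 S J m"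
  shows "reach prog (108, m) (\<lambda>s. fst s = 108 \<and> inv7 \<delta> k r m0 S (Suc J) (snd s)) (4 + (r * 7 + 1) + (4 + (k * 8 + 1) + 3))"
proof -
  have f: "m 26 = of_nat J" "m 25 = of_real (\<Prod>j<J. fw k \<delta> (take r (drop j S)))"
     "fr {2,3,24,25,26,27,28,29,30,31} m0 m"
    using inv unfolding inv7_def by auto
  have g: "m 17 = of_nat (2 * r - 1)" "m 14 = of_nat SB" "m 11 = of_nat r" "m 8 = of_nat k" "m 6 = 1" "m 12 = of_nat TB"
    using f(3) m0 unfolding fr_def by auto
  have gS: "\<forall>p<length S. m (SB + p) = of_nat (S ! p)" using f(3) m0(7,8) unfolding fr_def by auto
  have gT: "\<forall>w\<in>words k r. \<forall>x<k. m (TB + word_index k w * k + x) = \<delta> w x"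
    using f(3) m0(9,10) unfolding fr_def by auto
  have nJ: "\<not> 2 * r - Suc 0 \<le> J" using J by simp
  define v where "v = take r (drop J S)"
  have vw: "v \<in> words k r" unfolding v_def words_def using S J
    by (auto dest: in_set_takeD in_set_dropD)
  define idx where "idx = word_index k v"
  let ?P1 = "\<lambda>s. fst s = 112 \<and> inv8 (snd s) k SB J S 0 (snd s) \<and> fr {24,27,28} m (snd s)"
  have r1: "reach prog (108, m) ?P1 (Suc (Suc (Suc (Suc 0))))"
    apply (rule reach_step, simp add: step_simps g f nJ)+
    apply (rule reach_now)
    apply (simp add: inv8_def fr_def)
    done
  let ?P2 = "\<lambda>s. fst s = 119 \<and> snd s 27 = of_nat idx \<and> fr {2,24,27,28} m (snd s)"
  have r2: "reach prog s1 ?P2 (r * 7 + 1)" if H: "?P1 s1" for s1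
  proof -
    obtain m1 where s1: "s1 = (112, m1)" "inv8 m1 k SB J S 0 m1" "fr {24,27,28} m m1"
      using H by (cases s1) auto
    have m1: "m1 11 = of_nat r" "m1 8 = of_nat k" "m1 6 = 1" "\<forall>p<length S. m1 (SB + p) = of_nat (S ! p)"
      using s1(3) g gS m0(8) unfolding fr_def by auto
    have js: "J + r \<le> length S" using J S by simp
    have L: "reach prog (112, m1) (\<lambda>s. fst s = 119 \<and> inv8 m1 k SB J S r (snd s)) (r * 7 + 1)"
      by (rule L8_loop[OF js m1 m0(8) s1(2)])
    show ?thesis unfolding s1(1)
    proof (rule reach_mono[OF L order_refl])
      fix s assume a: "fst s = 119 \<and> inv8 m1 k SB J S r (snd s)"
      then have "fr {2,24,27,28} m1 (snd s)" unfolding inv8_def fr_def by auto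
      then have "fr {2,24,27,28} m (snd s)" by (rule fr_trans[OF s1(3)]) auto
      then show "fst s = 119 \<and> snd s 27 = of_nat idx \<and> fr {2,24,27,28} m (snd s)"
        using a unfolding inv8_def idx_def v_def by auto
    qed
  qed
  let ?P3 = "\<lambda>s. fst s = 123 \<and> inv9 \<delta> (snd s) v 0 (snd s) \<and> snd s 31 = of_nat (TB + idx * k)
       \<and> fr {2,24,27,28,29,30,31} m (snd s)"
  have r3: "reach prog s2 ?P3 (Suc (Suc (Suc (Suc 0))))" if H: "?P2 s2" for s2
  proof -
    obtain m2 where s2: "s2 = (119, m2)" "m2 27 = of_nat idx" "fr {2,24,27,28} m m2"
      using H by (cases s2) auto
    have g2: "m2 8 = of_nat k" "m2 12 = of_nat TB" using s2(3) g unfolding fr_def by auto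
    show ?thesis unfolding s2(1)
      apply (rule reach_step, simp add: step_simps g2 s2(2))+
      apply (rule reach_now)
      using s2(3) apply (simp add: inv9_def fr_def)
      done
  qed
  let ?P4 = "\<lambda>s. fst s = 131 \<and> snd s 29 = of_real (fw k \<delta> v) \<and> fr {2,3,24,27,28,29,30,31} m (snd s)"
  have r4: "reach prog s3 ?P4 (k * 8 + 1)" if H: "?P3 s3" for s3
  proof -
    obtain m3 where s3: "s3 = (123, m3)" "inv9 \<delta> m3 v 0 m3" "m3 31 = of_nat (TB + idx * k)"
       "fr {2,24,27,28,29,30,31} m m3"
      using H by (cases s3) auto
    have m3: "m3 8 = of_nat k" "m3 6 = 1"
      using s3(4) g unfolding fr_def by auto
    have tb: "\<forall>y<k. m3 (TB + idx * k + y) = \<delta> v y"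
    proof (intro allI impI)
      fix y assume y: "y < k"
      have "m3 (TB + idx * k + y) = m (TB + idx * k + y)" using s3(4) m0(9) unfolding fr_def by auto
      then show "m3 (TB + idx * k + y) = \<delta> v y" using gT vw y unfolding idx_def by auto
    qed
    have L: "reach prog (123, m3) (\<lambda>s. fst s = 131 \<and> inv9 \<delta> m3 v k (snd s)) (k * 8 + 1)"
      by (rule L9_loop[OF m3 s3(3) tb _ s3(2)]) (use m0(9) in simp)
    show ?thesis unfolding s3(1)
    proof (rule reach_mono[OF L order_refl])
      fix s assume a: "fst s = 131 \<and> inv9 \<delta> m3 v k (snd s)"
      then have "fr {2,3,29,30} m3 (snd s)" unfolding inv9_def fr_def by auto
      then have "fr {2,3,24,27,28,29,30,31} m (snd s)" by (rule fr_trans[OF s3(4)]) auto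
      then show "fst s = 131 \<and> snd s 29 = of_real (fw k \<delta> v) \<and> fr {2,3,24,27,28,29,30,31} m (snd s)"
        using a unfolding inv9_def by (simp add: sum_cnj_fw)
    qed
  qed
  have r5: "reach prog s4 (\<lambda>s. fst s = 108 \<and> inv7 \<delta> k r m0 S (Suc J) (snd s)) (Suc (Suc (Suc 0)))" if H: "?P4 s4" for s4
  proof -
    obtain m4 where s4: "s4 = (131, m4)" "m4 29 = of_real (fw k \<delta> v)" "fr {2,3,24,27,28,29,30,31} m m4"
      using H by (cases s4) auto
    have g4: "m4 25 = of_real (\<Prod>j<J. fw k \<delta> (take r (drop j S)))" "m4 26 = of_nat J" "m4 6 = 1"
      using s4(3) f g unfolding fr_def by auto
    show ?thesis unfolding s4(1)
      apply (rule reach_step, simp add: step_simps g4 s4(2))+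
      apply (rule reach_now)
      apply (simp add: inv7_def v_def)
      using f(3) s4(3) unfolding fr_def
      apply (intro conjI allI impI)
      apply simp_all
      done
  qed
  show ?thesis
    by (rule reach_mono[OF reach_seq[OF reach_seq[OF reach_seq[OF reach_seq[OF r1 r2] r3] r4] r5]]) auto
qed


lemma L7_exit:
  assumes m0: "m0 17 = of_nat (2 * r - 1)" and inv: "inv7 \<delta> k r m0 S (2 * r - 1) m"
  shows "reach prog (108, m) (\<lambda>s. fst s = 134 \<and> inv7 \<delta> k r m0 S (2 * r - 1) (snd s)) (Suc 0)"
proof -
  have g: "m 17 = of_nat (2 * r - 1)" "m 26 = of_nat (2 * r - 1)" using inv m0 unfolding inv7_def fr_def by auto
  show ?thesis
    apply (rule reach_step, simp add: step_simps g)
    apply (rule reach_now) using inv by simp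
qed

lemma L7_loop:
  assumes r: "r \<ge> 1" and S: "length S = 3 * r - 2" "set S \<subseteq> {..<k}"
    and m0: "m0 17 = of_nat (2 * r - 1)" "m0 14 = of_nat SB" "m0 11 = of_nat r" "m0 8 = of_nat k" "m0 6 = 1"
      "m0 12 = of_nat TB" "\<forall>p<length S. m0 (SB + p) = of_nat (S ! p)" "SB \<ge> 32" "TB \<ge> 32"
      "\<forall>w\<in>words k r. \<forall>x<k. m0 (TB + word_index k w * k + x) = \<delta> w x"
    and inv: "inv7 \<delta> k r m0 S 0 m"
  shows "reach prog (108, m) (\<lambda>s. fst s = 134 \<and> inv7 \<delta> k r m0 S (2 * r - 1) (snd s))
     ((2 * r - 1) * (4 + (r * 7 + 1) + (4 + (k * 8 + 1) + 3)) + 1)"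
proof -
  have "reach prog (108, m) (\<lambda>s. fst s = 134 \<and> inv7 \<delta> k r m0 S (2 * r - 1) (snd s))
     ((2 * r - 1 - 0) * (4 + (r * 7 + 1) + (4 + (k * 8 + 1) + 3)) + Suc 0)"
  proof (rule loop_rule[where I = "inv7 \<delta> k r m0 S" and n = "2 * r - 1"])
    fix i m assume a: "i < 2 * r - 1" "inv7 \<delta> k r m0 S i m"
    have "reach prog (108, m) (\<lambda>s. fst s = 108 \<and> inv7 \<delta> k r m0 S (Suc i) (snd s)) (4 + (r * 7 + 1) + (4 + (k * 8 + 1) + 3))"
      by (rule L7_body[OF a(1) r S m0 a(2)])
    then show "reach prog (108, m) (\<lambda>s. fst s = 108 \<and> inv7 \<delta> k r m0 S (Suc i) (snd s) \<or> fst s = 134 \<and> inv7 \<delta> k r m0 S (2 * r - 1) (snd s)) (4 + (r * 7 + 1) + (4 + (k * 8 + 1) + 3))"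
      by (rule reach_mono) auto
  next
    fix m assume a: "inv7 \<delta> k r m0 S (2 * r - 1) m"
    show "reach prog (108, m) (\<lambda>s. fst s = 134 \<and> inv7 \<delta> k r m0 S (2 * r - 1) (snd s)) (Suc 0)"
      by (rule L7_exit[OF _ a, OF m0(1)])
  qed (use inv in auto)
  then show ?thesis by simp
qed

fun digits :: "nat \<Rightarrow> nat \<Rightarrow> nat \<Rightarrow> nat list" where
  "digits k 0 n = []"
| "digits k (Suc t) n = digits k t (n div k) @ [n mod k]"

lemma length_digits[simp]: "length (digits k t n) = t"
  by (induction t arbitrary: n) auto

lemma digits_front: "digits k (Suc t) n = (n div k ^ t mod k) # digits k t n"
proof (induction t arbitrary: n)
  case 0 then show ?case by simp
next
  case (Suc t)
  have "digits k (Suc (Suc t)) n = digits k (Suc t) (n div k) @ [n mod k]" by simp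
  also have "\<dots> = (n div k div k ^ t mod k) # digits k t (n div k) @ [n mod k]" using Suc by simp
  also have "n div k div k ^ t = n div k ^ Suc t" by (simp add: div_mult2_eq)
  finally show ?case by simp
qed

lemma digits_set: "k > 0 \<Longrightarrow> set (digits k t n) \<subseteq> {..<k}"
  by (induction t arbitrary: n) auto

lemma digits_words: "k > 0 \<Longrightarrow> digits k t n \<in> words k t"
  unfolding words_def using digits_set by auto

lemma word_index_digits: "word_index k (digits k t n) = n mod k ^ t"
proof (induction t arbitrary: n)
  case 0 then show ?case by (simp add: word_index_def)
next
  case (Suc t)
  have "word_index k (digits k (Suc t) n) = (n div k) mod k ^ t * k + n mod k"
    using Suc by (simp add: word_index_snoc)
  also have "\<dots> = n mod (k * k ^ t)"
    by (simp add: mod_mult2_eq algebra_simps)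
  finally show ?case by (simp add: mult.commute)
qed

lemma word_index_bound: "w \<in> words k t \<Longrightarrow> word_index k w < k ^ t"
proof (induction w arbitrary: t rule: rev_induct)
  case Nil then show ?case by (simp add: words_def)
next
  case (snoc a w)
  then obtain t' where t: "t = Suc t'" "w \<in> words k t'" "a < k" unfolding words_def by (cases t) auto
  then have "word_index k w < k ^ t'" using snoc by simp
  then have "word_index k w * k + a < k ^ t' * k" using t(3)
  proof -
    have "word_index k w * k + a < word_index k w * k + k" using t(3) by simp
    also have "\<dots> = (word_index k w + 1) * k" by (simp add: algebra_simps)
    also have "\<dots> \<le> k ^ t' * k" using \<open>word_index k w < k ^ t'\<close> by (intro mult_right_mono) auto
    finally show ?thesis .
  qed
  then show ?case using t by (simp add: word_index_snoc mult.commute)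
qed

lemma digits_word_index: "w \<in> words k t \<Longrightarrow> digits k t (word_index k w) = w"
proof (induction w arbitrary: t rule: rev_induct)
  case Nil then show ?case by (simp add: words_def)
next
  case (snoc a w)
  then obtain t' where t: "t = Suc t'" "w \<in> words k t'" "a < k" unfolding words_def by (cases t) auto
  have "(word_index k w * k + a) div k = word_index k w" "(word_index k w * k + a) mod k = a"
    using t(3) by auto
  then show ?case using snoc t by (simp add: word_index_snoc)
qed


definition arr :: "nat \<Rightarrow> nat \<Rightarrow> nat \<Rightarrow> (nat \<Rightarrow> complex) \<Rightarrow> nat list \<Rightarrow> bool" where
  "arr q r SB m u \<longleftrightarrow> (\<forall>p<3 * r - 2. m (SB + p) = of_nat (sw q r u ! p))"

lemma sw_update: "length u = r \<Longrightarrow> i < r \<Longrightarrow> sw q r (u[i := d]) = (sw q r u)[r - 1 + i := d]"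
proof -
  assume a: "length u = r" "i < r"
  then have "\<not> (r - 1 + i < r - 1)" by arith
  then show ?thesis unfolding sw_def using a by (simp add: list_update_append)
qed

lemma arr_update:
  assumes "length u = r" "i < r" "arr q r SB m u"
  shows "arr q r SB (m(SB + (r - 1) + i := of_nat d)) (u[i := d])"
  unfolding arr_def
proof (intro allI impI)
  fix p assume p: "p < 3 * r - 2"
  have l: "length (sw q r u) = 3 * r - 2" unfolding sw_def using assms(1,2) by simp
  show "(m(SB + (r - 1) + i := of_nat d)) (SB + p) = of_nat (sw q r (u[i := d]) ! p)"
    using assms p l unfolding arr_def sw_update[OF assms(1,2)] by (auto simp: nth_list_update)
qed

lemma digits_update:
  assumes "t < r" "length u0 = r"
  shows "(take (r - t) u0 @ digits k t n)[r - 1 - t := n div k ^ t mod k] = take (r - Suc t) u0 @ digits k (Suc t) n"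
proof -
  have "take (r - t) u0 = take (r - Suc t) u0 @ [u0 ! (r - Suc t)]"
  proof -
    have "r - t = Suc (r - Suc t)" using assms(1) by simp
    then show ?thesis using assms by (simp add: take_Suc_conv_app_nth)
  qed
  moreover have "length (take (r - Suc t) u0) = r - 1 - t" using assms by simp
  ultimately show ?thesis by (simp add: list_update_append digits_front del: digits.simps(2))
qed

definition inv6 :: "nat \<Rightarrow> nat \<Rightarrow> nat \<Rightarrow> nat \<Rightarrow> nat \<Rightarrow> nat list \<Rightarrow> (nat \<Rightarrow> complex) \<Rightarrow> nat \<Rightarrow> (nat \<Rightarrow> complex) \<Rightarrow> bool" where
  "inv6 k q r SB n u0 m0 t m \<longleftrightarrow> m 22 = of_nat t \<and> m 20 = of_nat (n div k ^ t) \<and> m 21 = of_nat (SB + (2 * r - 2) - t)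
     \<and> arr q r SB m (take (r - t) u0 @ digits k t n) \<and> fr ({2,20,21,22,23} \<union> {SB..<SB + (3 * r - 2)}) m0 m"

lemma cplx_mod: "(of_nat X :: complex) - of_nat (X div k) * of_nat k = of_nat (X mod k)"
proof -
  have "X = X div k * k + X mod k" by simp
  then have "(of_nat X :: complex) = of_nat (X div k) * of_nat k + of_nat (X mod k)"
    by (metis of_nat_add of_nat_mult)
  then show ?thesis by (simp add: algebra_simps)
qed

lemma L6_post:
  assumes t: "t < r" and u0: "length u0 = r" and SB: "SB \<ge> 32"
    and pos: "pos = SB + (2 * r - 2) - t" and X: "X = n div k ^ t"
    and a: "arr q r SB m (take (r - t) u0 @ digits k t n)"
    and b: "fr ({2,20,21,22,23} \<union> {SB..<SB + (3 * r - 2)}) m0 m"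
    and c: "m' 22 = of_nat t + 1" "m' 20 = of_nat (X div k)" "m' 21 = of_nat pos - 1"
      "\<forall>p<3 * r - 2. m' (SB + p) = (m(pos := of_nat (X mod k))) (SB + p)"
      "\<forall>a. a \<notin> {2,20,21,22,23,pos} \<longrightarrow> m' a = m a"
  shows "inv6 k q r SB n u0 m0 (Suc t) m'"
  unfolding inv6_def
proof (intro conjI)
  show "m' 22 = of_nat (Suc t)" using c by simp
  have e: "n div k ^ t div k = n div k ^ Suc t"
  proof -
    have "n div k ^ Suc t = n div (k ^ t * k)" by (simp add: mult.commute)
    also have "\<dots> = n div k ^ t div k" by (rule div_mult2_eq)
    finally show ?thesis by simp
  qed
  show "m' 20 = of_nat (n div k ^ Suc t)"
  proof -
    have "m' 20 = of_nat (X div k)" by (rule c(2))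
    also have "X div k = n div k ^ Suc t" using X e by simp
    finally show ?thesis .
  qed
  have p1: "pos \<ge> 1" using pos SB t by arith
  have "(of_nat pos :: complex) - 1 = of_nat (pos - 1)" using p1 by (simp add: of_nat_diff)
  then show "m' 21 = of_nat (SB + (2 * r - 2) - Suc t)" using c pos t by simp
  have pos': "pos = SB + (r - 1) + (r - 1 - t)" using pos t by simp
  have len: "length (take (r - t) u0 @ digits k t n) = r" using t u0 by simp
  have "arr q r SB (m(SB + (r - 1) + (r - 1 - t) := of_nat (n div k ^ t mod k)))
      ((take (r - t) u0 @ digits k t n)[r - 1 - t := n div k ^ t mod k])"
    by (rule arr_update[OF len _ a]) (use t in simp)
  then have "arr q r SB (m(pos := of_nat (X mod k))) (take (r - Suc t) u0 @ digits k (Suc t) n)"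
    unfolding digits_update[OF t u0] pos' X .
  then show "arr q r SB m' (take (r - Suc t) u0 @ digits k (Suc t) n)"
    using c(4) unfolding arr_def by simp
  have "pos \<in> {SB..<SB + (3 * r - 2)}" using pos t by auto
  then show "fr ({2,20,21,22,23} \<union> {SB..<SB + (3 * r - 2)}) m0 m'"
    using b c(5) unfolding fr_def by auto
qed

lemma L6_body:
  assumes t: "t < r" and u0: "length u0 = r" and k: "k \<ge> 2" and n: "n < KR"
    and m0: "m0 11 = of_nat r" "m0 8 = of_nat k" "m0 13 = of_nat IDB" "m0 5 = 0" "m0 6 = 1"
      "\<forall>a<KR. m0 (IDB + a) = of_nat a" "IDB \<ge> 32" "IDB + KR \<le> SB"
    and inv: "inv6 k q r SB n u0 m0 t m"
  shows "reach prog (95, m) (\<lambda>s. fst s = 95 \<and> inv6 k q r SB n u0 m0 (Suc t) (snd s))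
     (Suc (Suc (Suc (Suc (Suc (Suc (Suc (Suc (Suc (Suc (Suc 0)))))))))))"
proof -
  define X where "X = n div k ^ t"
  define pos where "pos = SB + (2 * r - 2) - t"
  have f: "m 22 = of_nat t" "m 20 = of_nat X" "m 21 = of_nat pos"
     "arr q r SB m (take (r - t) u0 @ digits k t n)" "fr ({2,20,21,22,23} \<union> {SB..<SB + (3 * r - 2)}) m0 m"
    using inv unfolding inv6_def X_def pos_def by auto
  have g: "m 11 = of_nat r" "m 8 = of_nat k" "m 13 = of_nat IDB" "m 5 = 0" "m 6 = 1"
    using f(5) m0 unfolding fr_def by auto
  have Xn: "X \<le> n" unfolding X_def by (simp add: div_le_dividend)
  have Xk: "X div k < KR" using Xn n by (meson div_le_dividend le_less_trans)
  have h: "m (X div k + IDB) = of_nat (X div k)"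
  proof -
    have "m (X div k + IDB) = m0 (X div k + IDB)" using f(5) m0(7,8) Xk unfolding fr_def by auto
    then show ?thesis using m0(6) Xk by (simp add: add.commute)
  qed
  have ni: "\<not> r \<le> t" using t by simp
  have kp: "0 < k" using k by simp
  have ad: "addr (of_nat X / of_nat k + of_nat IDB) = X div k + IDB" using addr_div[OF kp] by simp
  have ne1: "X div k + IDB \<noteq> 2" using m0(7) by simp
  have pos32: "pos \<ge> 32" unfolding pos_def using m0(7,8) t by simp
  have ne2: "pos \<noteq> 0" "pos \<noteq> 2" "pos \<noteq> 5" "pos \<noteq> 6" "pos \<noteq> 20" "pos \<noteq> 21" "pos \<noteq> 22" "pos \<noteq> 23"
    "0 \<noteq> pos" "2 \<noteq> pos" "5 \<noteq> pos" "6 \<noteq> pos" "20 \<noteq> pos" "21 \<noteq> pos" "22 \<noteq> pos" "23 \<noteq> pos"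
    using pos32 by simp_all
  show ?thesis
    apply (rule reach_step, simp add: step_simps f g h ni ad ne1 ne2)+
    apply (rule reach_now)
    apply (simp only: fst_conv snd_conv simp_thms)
    apply (rule L6_post[OF t u0 _ pos_def X_def f(4,5)])
    using m0(7,8) pos32 apply (simp_all add: cplx_mod)
    done
qed


lemma L6_exit:
  assumes m0: "m0 11 = of_nat r" and SB: "SB \<ge> 32" and inv: "inv6 k q r SB n u0 m0 r m"
  shows "reach prog (95, m) (\<lambda>s. fst s = 106 \<and> inv6 k q r SB n u0 m0 r (snd s)) (Suc 0)"
proof -
  have g: "m 11 = of_nat r" "m 22 = of_nat r" using inv m0 SB unfolding inv6_def fr_def by auto
  show ?thesis
    apply (rule reach_step, simp add: step_simps g)
    apply (rule reach_now) using inv by simp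
qed

lemma L6_loop:
  assumes u0: "length u0 = r" and k: "k \<ge> 2" and n: "n < KR"
    and m0: "m0 11 = of_nat r" "m0 8 = of_nat k" "m0 13 = of_nat IDB" "m0 5 = 0" "m0 6 = 1"
      "\<forall>a<KR. m0 (IDB + a) = of_nat a" "IDB \<ge> 32" "IDB + KR \<le> SB"
    and inv: "inv6 k q r SB n u0 m0 0 m"
  shows "reach prog (95, m) (\<lambda>s. fst s = 106 \<and> inv6 k q r SB n u0 m0 r (snd s)) (r * 11 + 1)"
proof -
  have "reach prog (95, m) (\<lambda>s. fst s = 106 \<and> inv6 k q r SB n u0 m0 r (snd s))
     ((r - 0) * Suc (Suc (Suc (Suc (Suc (Suc (Suc (Suc (Suc (Suc (Suc 0)))))))))) + Suc 0)"
  proof (rule loop_rule[where I = "inv6 k q r SB n u0 m0" and n = r])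
    fix i m assume a: "i < r" "inv6 k q r SB n u0 m0 i m"
    have "reach prog (95, m) (\<lambda>s. fst s = 95 \<and> inv6 k q r SB n u0 m0 (Suc i) (snd s)) (Suc (Suc (Suc (Suc (Suc (Suc (Suc (Suc (Suc (Suc (Suc 0)))))))))))"
      by (rule L6_body[OF a(1) u0 k n m0 a(2)])
    then show "reach prog (95, m) (\<lambda>s. fst s = 95 \<and> inv6 k q r SB n u0 m0 (Suc i) (snd s) \<or> fst s = 106 \<and> inv6 k q r SB n u0 m0 r (snd s)) (Suc (Suc (Suc (Suc (Suc (Suc (Suc (Suc (Suc (Suc (Suc 0)))))))))))"
      by (rule reach_mono) auto
  next
    fix m assume a: "inv6 k q r SB n u0 m0 r m"
    show "reach prog (95, m) (\<lambda>s. fst s = 106 \<and> inv6 k q r SB n u0 m0 r (snd s)) (Suc 0)"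
      by (rule L6_exit[OF _ _ a, OF m0(1)]) (use m0(7,8) in simp)
  qed (use inv in auto)
  then show ?thesis by (rule reach_mono) auto
qed

definition EE :: "nat \<Rightarrow> nat \<Rightarrow> nat" where "EE k r = 3 + r + k ^ (r + 1)"
definition TBa :: "nat \<Rightarrow> nat \<Rightarrow> nat" where "TBa k r = 64 * EE k r + 3 + r"
definition IDBa :: "nat \<Rightarrow> nat \<Rightarrow> nat" where "IDBa k r = 66 * EE k r"
definition SBa :: "nat \<Rightarrow> nat \<Rightarrow> nat" where "SBa k r = 67 * EE k r"

lemma pow_ge: "k \<ge> 2 \<Longrightarrow> k ^ r \<ge> r + 1"
proof (induction r)
  case 0 then show ?case by simp
next
  case (Suc r)
  have "k ^ Suc r = k * k ^ r" by simp
  also have "\<dots> \<ge> 2 * (r + 1)" using Suc by (intro mult_mono) auto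
  finally show ?case by simp
qed

lemma layout:
  assumes k: "k \<ge> 2" and r: "r \<ge> 1"
  shows "EE k r \<ge> 8" "k ^ r < EE k r" "k ^ (r + 1) < EE k r" "3 * r - 2 < EE k r" "k ^ r * k = k ^ (r + 1)"
    "TBa k r + k ^ (r + 1) \<le> 65 * EE k r" "TBa k r \<ge> 64 * EE k r"
proof -
  have a: "k ^ (r + 1) \<ge> r + 2" using pow_ge[OF k, of "r + 1"] by simp
  have b: "k ^ r \<le> k ^ (r + 1)" using k by (intro power_increasing) auto
  have c: "k ^ (r + 1) \<ge> 4"
  proof -
    have "k ^ (r + 1) \<ge> 2 ^ (r + 1)" using k by (intro power_mono) auto
    moreover have "(2::nat) ^ (r + 1) \<ge> 2 ^ 2" using r by (intro power_increasing) auto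
    ultimately show ?thesis by simp
  qed
  have d: "k ^ (r + 1) \<ge> 2 * r + 2"
  proof -
    have "k ^ (r + 1) \<ge> 2 ^ (r + 1)" using k by (intro power_mono) auto
    moreover have "(2::nat) ^ (r + 1) \<ge> 2 * r + 2"
      using pow_ge[of 2 r] by simp
    ultimately show ?thesis by simp
  qed
  show "EE k r \<ge> 8" unfolding EE_def using c r by simp
  show "k ^ r < EE k r" unfolding EE_def using b by (simp del: power_Suc)
  show "k ^ (r + 1) < EE k r" unfolding EE_def by simp
  show "3 * r - 2 < EE k r" unfolding EE_def using d by simp
  show "k ^ r * k = k ^ (r + 1)" by simp
  show "TBa k r + k ^ (r + 1) \<le> 65 * EE k r" unfolding TBa_def EE_def by simp
  show "TBa k r \<ge> 64 * EE k r" unfolding TBa_def by simp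
qed

lemma table_addr_bound:
  assumes k: "k \<ge> 2" and w: "w \<in> words k r" and x: "x < k"
  shows "word_index k w * k + x < k ^ (r + 1)"
proof -
  have "word_index k w < k ^ r" by (rule word_index_bound[OF w])
  then have "word_index k w * k + x < word_index k w * k + k" using x by simp
  also have "\<dots> = (word_index k w + 1) * k" by simp
  also have "\<dots> \<le> k ^ r * k" using \<open>word_index k w < k ^ r\<close> by (intro mult_right_mono) auto
  finally show ?thesis by (simp add: mult.commute)
qed

definition glob :: "nat \<Rightarrow> nat \<Rightarrow> nat \<Rightarrow> (nat list \<Rightarrow> nat \<Rightarrow> complex) \<Rightarrow> (nat \<Rightarrow> complex) \<Rightarrow> bool" where
  "glob k q r \<delta> m \<longleftrightarrow> m 5 = 0 \<and> m 6 = 1 \<and> m 8 = of_nat k \<and> m 9 = of_nat q \<and> m 11 = of_nat r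
    \<and> m 12 = of_nat (TBa k r) \<and> m 13 = of_nat (IDBa k r) \<and> m 14 = of_nat (SBa k r) \<and> m 15 = of_nat (k ^ r)
    \<and> m 16 = of_nat (3 * r - 2) \<and> m 17 = of_nat (2 * r - 1)
    \<and> (\<forall>w\<in>words k r. \<forall>x<k. m (TBa k r + word_index k w * k + x) = \<delta> w x)
    \<and> (\<forall>a<k ^ r. m (IDBa k r + a) = of_nat a)"

definition Rmain :: "nat \<Rightarrow> nat \<Rightarrow> nat set" where
  "Rmain k r = {0,2,3} \<union> {19..<32} \<union> {SBa k r..<SBa k r + (3 * r - 2)}"

lemma glob_fr:
  assumes k: "k \<ge> 2" and r: "r \<ge> 1" and g: "glob k q r \<delta> m" and f: "fr A m m'" and A: "A \<subseteq> Rmain k r"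
  shows "glob k q r \<delta> m'"
proof -
  note L = layout[OF k r]
  have regs: "\<And>a. a \<in> {5,6,8,9,11,12,13,14,15,16,17} \<Longrightarrow> m' a = m a"
    using f A unfolding fr_def Rmain_def SBa_def using L(1) by auto
  have tab: "m' (TBa k r + word_index k w * k + x) = m (TBa k r + word_index k w * k + x)"
    if "w \<in> words k r" "x < k" for w x
  proof -
    have "word_index k w * k + x < k ^ (r + 1)" by (rule table_addr_bound[OF k that])
    then have "TBa k r + word_index k w * k + x \<notin> Rmain k r"
      using L(1,6,7) unfolding Rmain_def SBa_def by auto
    then show ?thesis using f A unfolding fr_def by auto
  qed
  have idt: "m' (IDBa k r + a) = m (IDBa k r + a)" if "a < k ^ r" for a
  proof -
    have "IDBa k r + a \<notin> Rmain k r"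
      using L(1,2) that unfolding Rmain_def SBa_def IDBa_def by auto
    then show ?thesis using f A unfolding fr_def by auto
  qed
  show ?thesis using g regs tab idt unfolding glob_def by simp
qed


definition chk :: "nat \<Rightarrow> nat \<Rightarrow> nat \<Rightarrow> (nat list \<Rightarrow> nat \<Rightarrow> complex) \<Rightarrow> nat \<Rightarrow> bool" where
  "chk k q r \<delta> n \<longleftrightarrow> (\<Prod>j<2 * r - 1. fw k \<delta> (take r (drop j (sw q r (digits k r n))))) = 1"

definition Fin :: "nat \<Rightarrow> nat \<Rightarrow> nat \<Rightarrow> (nat list \<Rightarrow> nat \<Rightarrow> complex) \<Rightarrow> state \<Rightarrow> bool" where
  "Fin k q r \<delta> s \<longleftrightarrow> halted prog s \<and> snd s 0 = (if (\<forall>n<k ^ r. chk k q r \<delta> n) then 1 else 0)"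

definition inv5 :: "nat \<Rightarrow> nat \<Rightarrow> nat \<Rightarrow> (nat list \<Rightarrow> nat \<Rightarrow> complex) \<Rightarrow> nat \<Rightarrow> (nat \<Rightarrow> complex) \<Rightarrow> bool" where
  "inv5 k q r \<delta> n m \<longleftrightarrow> glob k q r \<delta> m \<and> m 19 = of_nat n \<and> (\<exists>u\<in>words k r. arr q r (SBa k r) m u)
     \<and> (\<forall>n'<n. chk k q r \<delta> n')"

lemma sw_words:
  assumes "u \<in> words k r" "q < k"
  shows "length (sw q r u) = 3 * r - 2 \<or> r = 0" "set (sw q r u) \<subseteq> {..<k}"
  using assms unfolding sw_def words_def by auto

lemma L5_body:
  assumes k: "k \<ge> 2" and r: "r \<ge> 1" and q: "q < k" and n: "n < k ^ r"
    and inv: "inv5 k q r \<delta> n m"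
  shows "reach prog (90, m) (\<lambda>s. (fst s = 90 \<and> inv5 k q r \<delta> (Suc n) (snd s)) \<or> Fin k q r \<delta> s)
     (Suc (Suc (Suc (Suc (Suc 0)))) + (r * 11 + 1) + Suc (Suc 0) + ((2 * r - 1) * (4 + (r * 7 + 1) + (4 + (k * 8 + 1) + 3)) + 1) + Suc (Suc (Suc 0)))"
proof -
  note L = layout[OF k r]
  define SB where "SB = SBa k r"
  define IDB where "IDB = IDBa k r"
  define TB where "TB = TBa k r"
  have gl: "glob k q r \<delta> m" and m19: "m 19 = of_nat n" and prev: "\<forall>n'<n. chk k q r \<delta> n'"
    using inv unfolding inv5_def by auto
  obtain u where u: "u \<in> words k r" "arr q r SB m u" using inv unfolding inv5_def SB_def by auto
  have ul: "length u = r" using u unfolding words_def by simp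
  have g: "m 5 = 0" "m 6 = 1" "m 8 = of_nat k" "m 9 = of_nat q" "m 11 = of_nat r"
    "m 12 = of_nat TB" "m 13 = of_nat IDB" "m 14 = of_nat SB" "m 15 = of_nat (k ^ r)"
    "m 16 = of_nat (3 * r - 2)" "m 17 = of_nat (2 * r - 1)"
    "\<forall>w\<in>words k r. \<forall>x<k. m (TB + word_index k w * k + x) = \<delta> w x"
    "\<forall>a<k ^ r. m (IDB + a) = of_nat a"
    using gl unfolding glob_def SB_def IDB_def TB_def by auto
  have SB32: "SB \<ge> 32" "IDB \<ge> 32" "TB \<ge> 32" "IDB + k ^ r \<le> SB"
    unfolding SB_def IDB_def TB_def IDBa_def SBa_def TBa_def using L by auto
  have nn: "\<not> k ^ r \<le> n" using n by simp
  have r21: "2 * r - Suc 0 = Suc (2 * r - 2)" using r by simp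
  let ?P1 = "\<lambda>s. fst s = 95 \<and> inv6 k q r SB n u (snd s) 0 (snd s) \<and> fr {20,21,22} m (snd s)"
  have r1: "reach prog (90, m) ?P1 (Suc (Suc (Suc (Suc (Suc 0)))))"
    apply (rule reach_step, simp add: step_simps g m19 nn)+
    apply (rule reach_now)
    using u(2) ul SB32 unfolding arr_def apply (simp add: inv6_def fr_def r21 arr_def)
    done
  define S where "S = sw q r (digits k r n)"
  have Sl: "length S = 3 * r - 2" unfolding S_def sw_def using r by simp
  have Sk: "set S \<subseteq> {..<k}" unfolding S_def using sw_words(2)[OF digits_words q] k by simp
  define R6 where "R6 = {2,20,21,22,23} \<union> {SB..<SB + (3 * r - 2)}"
  let ?P2 = "\<lambda>s. fst s = 106 \<and> arr q r SB (snd s) (digits k r n) \<and> fr R6 m (snd s)"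
  have r2: "reach prog s1 ?P2 (r * 11 + 1)" if H: "?P1 s1" for s1
  proof -
    obtain m1 where s1: "s1 = (95, m1)" "inv6 k q r SB n u m1 0 m1" "fr {20,21,22} m m1"
      using H by (cases s1) auto
    have m1: "m1 11 = of_nat r" "m1 8 = of_nat k" "m1 13 = of_nat IDB" "m1 5 = 0" "m1 6 = 1"
      "\<forall>a<k ^ r. m1 (IDB + a) = of_nat a"
      using s1(3) g SB32 unfolding fr_def by auto
    have Lp: "reach prog (95, m1) (\<lambda>s. fst s = 106 \<and> inv6 k q r SB n u m1 r (snd s)) (r * 11 + 1)"
      by (rule L6_loop[OF ul k n m1 SB32(2,4) s1(2)])
    show ?thesis unfolding s1(1)
    proof (rule reach_mono[OF Lp order_refl])
      fix s assume a: "fst s = 106 \<and> inv6 k q r SB n u m1 r (snd s)"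
      then have "fr ({2,20,21,22,23} \<union> {SB..<SB + (3 * r - 2)}) m1 (snd s)" unfolding inv6_def by auto
      then have "fr R6 m (snd s)" unfolding R6_def by (rule fr_trans[OF s1(3)]) auto
      then show "fst s = 106 \<and> arr q r SB (snd s) (digits k r n) \<and> fr R6 m (snd s)"
        using a unfolding inv6_def by simp
    qed
  qed
  define R7 where "R7 = R6 \<union> {25, 26}"
  let ?P3 = "\<lambda>s. fst s = 108 \<and> inv7 \<delta> k r (snd s) S 0 (snd s) \<and> arr q r SB (snd s) (digits k r n) \<and> fr R7 m (snd s)"
  have r3: "reach prog s2 ?P3 (Suc (Suc 0))" if H: "?P2 s2" for s2
  proof -
    obtain m2 where s2: "s2 = (106, m2)" "arr q r SB m2 (digits k r n)" "fr R6 m m2"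
      using H by (cases s2) auto
    have g2: "m2 5 = 0" "m2 6 = 1" using s2(3) g unfolding fr_def R6_def using SB32 by auto
    have ar: "arr q r SB (m2(25 := 1, 26 := 0)) (digits k r n)"
      using s2(2) SB32 unfolding arr_def by simp
    show ?thesis unfolding s2(1)
      apply (rule reach_step, simp add: step_simps g2)+
      apply (rule reach_now)
      using ar s2(3) unfolding R7_def apply (simp add: inv7_def fr_def)
      done
  qed
  define R8 where "R8 = R7 \<union> {2,3,24,25,26,27,28,29,30,31}"
  let ?P4 = "\<lambda>s. fst s = 134 \<and> snd s 25 = of_real (\<Prod>j<2 * r - 1. fw k \<delta> (take r (drop j S))) \<and> fr R8 m (snd s)
     \<and> arr q r SB (snd s) (digits k r n)"
  have r4: "reach prog s3 ?P4 ((2 * r - 1) * (4 + (r * 7 + 1) + (4 + (k * 8 + 1) + 3)) + 1)" if H: "?P3 s3" for s3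
  proof -
    obtain m3 where s3: "s3 = (108, m3)" "inv7 \<delta> k r m3 S 0 m3" "arr q r SB m3 (digits k r n)" "fr R7 m m3"
      using H by (cases s3) auto
    have nR7: "a \<notin> R7" if "a \<in> {6,8,11,12,14,17}" for a
      using that SB32 unfolding R7_def R6_def by auto
    have m3: "m3 17 = of_nat (2 * r - 1)" "m3 14 = of_nat SB" "m3 11 = of_nat r" "m3 8 = of_nat k" "m3 6 = 1"
      "m3 12 = of_nat TB"
      using s3(4) g nR7 unfolding fr_def by auto
    have m3S: "\<forall>p<length S. m3 (SB + p) = of_nat (S ! p)" using s3(3) Sl unfolding arr_def S_def by simp
    have m3T: "\<forall>w\<in>words k r. \<forall>x<k. m3 (TB + word_index k w * k + x) = \<delta> w x"
    proof (intro ballI allI impI)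
      fix w x assume wx: "w \<in> words k r" "x < k"
      have "word_index k w * k + x < k ^ (r + 1)" by (rule table_addr_bound[OF k wx])
      then have "TB + word_index k w * k + x \<notin> R7"
        using L SB32 unfolding R7_def R6_def TB_def SB_def SBa_def by auto
      then show "m3 (TB + word_index k w * k + x) = \<delta> w x" using s3(4) g(12) wx unfolding fr_def by auto
    qed
    have Lp: "reach prog (108, m3) (\<lambda>s. fst s = 134 \<and> inv7 \<delta> k r m3 S (2 * r - 1) (snd s))
       ((2 * r - 1) * (4 + (r * 7 + 1) + (4 + (k * 8 + 1) + 3)) + 1)"
      by (rule L7_loop[OF r Sl Sk m3 m3S SB32(1,3) m3T s3(2)])
    show ?thesis unfolding s3(1)
    proof (rule reach_mono[OF Lp order_refl])
      fix s assume a: "fst s = 134 \<and> inv7 \<delta> k r m3 S (2 * r - 1) (snd s)"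
      then have "fr {2,3,24,25,26,27,28,29,30,31} m3 (snd s)" unfolding inv7_def by auto
      then have f8: "fr R8 m (snd s)" unfolding R8_def by (rule fr_trans[OF s3(4)]) auto
      have "arr q r SB (snd s) (digits k r n)"
        using s3(3) \<open>fr {2,3,24,25,26,27,28,29,30,31} m3 (snd s)\<close> SB32 unfolding arr_def fr_def by auto
      then show "fst s = 134 \<and> snd s 25 = of_real (\<Prod>j<2 * r - 1. fw k \<delta> (take r (drop j S))) \<and> fr R8 m (snd s)
         \<and> arr q r SB (snd s) (digits k r n)"
        using a f8 unfolding inv7_def by simp
    qed
  qed
  have r5: "reach prog s4 (\<lambda>s. (fst s = 90 \<and> inv5 k q r \<delta> (Suc n) (snd s)) \<or> Fin k q r \<delta> s) (Suc (Suc (Suc 0)))"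
    if H: "?P4 s4" for s4
  proof -
    obtain m4 where s4: "s4 = (134, m4)" "m4 25 = of_real (\<Prod>j<2 * r - 1. fw k \<delta> (take r (drop j S)))" "fr R8 m m4"
       "arr q r SB m4 (digits k r n)"
      using H by (cases s4) auto
    have R8: "R8 \<subseteq> Rmain k r" unfolding R8_def R7_def R6_def Rmain_def SB_def by auto
    have nR8: "6 \<notin> R8" "19 \<notin> R8" unfolding R8_def R7_def R6_def using SB32 by auto
    have g4: "m4 6 = 1" "m4 19 = of_nat n" using s4(3) g m19 nR8 unfolding fr_def by auto
    show ?thesis
    proof (cases "chk k q r \<delta> n")
      case True
      then have c1: "m4 25 = 1" using s4(2) unfolding chk_def S_def by simp
      show ?thesis unfolding s4(1)
        apply (rule reach_step, simp add: step_simps g4 c1)+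
        apply (rule reach_now)
        apply (rule disjI1)
        apply (simp add: inv5_def)
      proof (intro conjI)
        have "fr (R8 \<union> {19}) m (m4(19 := of_nat n + 1))"
          using s4(3) unfolding fr_def by auto
        then show "glob k q r \<delta> (m4(19 := of_nat n + 1))"
          by (rule glob_fr[OF k r gl]) (use R8 in \<open>auto simp: Rmain_def\<close>)
        show "\<exists>u\<in>words k r. arr q r (SBa k r) (m4(19 := of_nat n + 1)) u"
          using s4(4) digits_words[of k r n] k SB32 unfolding arr_def SB_def by auto
        show "\<forall>n'<Suc n. chk k q r \<delta> n'" using prev True less_Suc_eq by auto
      qed
    next
      case False
      then have c1: "m4 25 \<noteq> 1" using s4(2) unfolding chk_def S_def by (simp del: of_real_prod)
      have nall: "\<not> (\<forall>n<k ^ r. chk k q r \<delta> n)" using False n by auto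
      show ?thesis unfolding s4(1)
        apply (rule reach_step, simp add: step_simps g4 c1)+
        apply (rule reach_now)
        apply (rule disjI2)
        apply (simp add: Fin_def step_simps nall)
        done
    qed
  qed
  show ?thesis
    by (rule reach_mono[OF reach_seq[OF reach_seq[OF reach_seq[OF reach_seq[OF r1 r2] r3] r4] r5]]) auto
qed


definition B5 :: "nat \<Rightarrow> nat \<Rightarrow> nat" where
  "B5 k r = Suc (Suc (Suc (Suc (Suc 0)))) + (r * 11 + 1) + Suc (Suc 0) + ((2 * r - 1) * (4 + (r * 7 + 1) + (4 + (k * 8 + 1) + 3)) + 1) + Suc (Suc (Suc 0))"

lemma L5_exit:
  assumes inv: "inv5 k q r \<delta> (k ^ r) m"
  shows "reach prog (90, m) (Fin k q r \<delta>) (Suc (Suc 0))"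
proof -
  have g: "m 15 = of_nat (k ^ r)" "m 19 = of_nat (k ^ r)" using inv unfolding inv5_def glob_def by auto
  have all: "\<forall>n<k ^ r. chk k q r \<delta> n" using inv unfolding inv5_def by auto
  show ?thesis
    apply (rule reach_step, simp add: step_simps g del: of_nat_power)+
    apply (rule reach_now)
    apply (simp add: Fin_def step_simps all)
    done
qed

lemma L5_loop:
  assumes k: "k \<ge> 2" and r: "r \<ge> 1" and q: "q < k" and inv: "inv5 k q r \<delta> 0 m"
  shows "reach prog (90, m) (Fin k q r \<delta>) (k ^ r * B5 k r + 2)"
proof -
  have "reach prog (90, m) (Fin k q r \<delta>) ((k ^ r - 0) * B5 k r + Suc (Suc 0))"
  proof (rule loop_rule[where I = "inv5 k q r \<delta>" and n = "k ^ r"])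
    fix i m assume a: "i < k ^ r" "inv5 k q r \<delta> i m"
    show "reach prog (90, m) (\<lambda>s. fst s = 90 \<and> inv5 k q r \<delta> (Suc i) (snd s) \<or> Fin k q r \<delta> s) (B5 k r)"
      unfolding B5_def by (rule L5_body[OF k r q a])
  next
    fix m assume a: "inv5 k q r \<delta> (k ^ r) m"
    show "reach prog (90, m) (Fin k q r \<delta>) (Suc (Suc 0))" by (rule L5_exit[OF a])
  qed (use inv in auto)
  then show ?thesis by simp
qed

definition inv3 :: "nat \<Rightarrow> (nat \<Rightarrow> complex) \<Rightarrow> nat \<Rightarrow> (nat \<Rightarrow> complex) \<Rightarrow> bool" where
  "inv3 IDB m0 a m \<longleftrightarrow> m 19 = of_nat a \<and> (\<forall>b<a. m (IDB + b) = of_nat b) \<and> fr ({2,19} \<union> {IDB..<IDB + a}) m0 m"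

lemma L3_body:
  assumes a: "a < KR" and m0: "m0 15 = of_nat KR" "m0 13 = of_nat IDB" "m0 6 = 1" "IDB \<ge> 32"
    and inv: "inv3 IDB m0 a m"
  shows "reach prog (78, m) (\<lambda>s. fst s = 78 \<and> inv3 IDB m0 (Suc a) (snd s)) (Suc (Suc (Suc (Suc (Suc 0)))))"
proof -
  have f: "m 19 = of_nat a" "\<forall>b<a. m (IDB + b) = of_nat b" "fr ({2,19} \<union> {IDB..<IDB + a}) m0 m"
    using inv unfolding inv3_def by auto
  have g: "m 15 = of_nat KR" "m 13 = of_nat IDB" "m 6 = 1" using f(3) m0 unfolding fr_def by auto
  have na: "\<not> KR \<le> a" using a by simp
  have ne: "IDB + a \<noteq> 19" "19 \<noteq> IDB + a" "IDB + a \<noteq> 0" "0 \<noteq> IDB + a" "IDB + a \<noteq> 6" "6 \<noteq> IDB + a" using m0(4) by auto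
  show ?thesis
    apply (rule reach_step, simp add: step_simps f g na ne)+
    apply (rule reach_now)
    apply (simp add: inv3_def)
    using f m0(4) unfolding fr_def apply (auto simp: less_Suc_eq)
    done
qed

lemma L3_loop:
  assumes m0: "m0 15 = of_nat KR" "m0 13 = of_nat IDB" "m0 6 = 1" "IDB \<ge> 32"
    and inv: "inv3 IDB m0 0 m"
  shows "reach prog (78, m) (\<lambda>s. fst s = 83 \<and> inv3 IDB m0 KR (snd s)) (KR * 5 + 1)"
proof -
  have "reach prog (78, m) (\<lambda>s. fst s = 83 \<and> inv3 IDB m0 KR (snd s)) ((KR - 0) * Suc (Suc (Suc (Suc (Suc 0)))) + Suc 0)"
  proof (rule loop_rule[where I = "inv3 IDB m0" and n = KR])
    fix i m assume a: "i < KR" "inv3 IDB m0 i m"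
    have "reach prog (78, m) (\<lambda>s. fst s = 78 \<and> inv3 IDB m0 (Suc i) (snd s)) (Suc (Suc (Suc (Suc (Suc 0)))))"
      by (rule L3_body[OF a(1) m0 a(2)])
    then show "reach prog (78, m) (\<lambda>s. fst s = 78 \<and> inv3 IDB m0 (Suc i) (snd s) \<or> fst s = 83 \<and> inv3 IDB m0 KR (snd s)) (Suc (Suc (Suc (Suc (Suc 0)))))"
      by (rule reach_mono) auto
  next
    fix m assume a: "inv3 IDB m0 KR m"
    have g: "m 15 = of_nat KR" "m 19 = of_nat KR" using a m0 unfolding inv3_def fr_def by auto
    show "reach prog (78, m) (\<lambda>s. fst s = 83 \<and> inv3 IDB m0 KR (snd s)) (Suc 0)"
      apply (rule reach_step, simp add: step_simps g)
      apply (rule reach_now) using a by simp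
  qed (use inv in auto)
  then show ?thesis by (rule reach_mono) auto
qed

definition inv4 :: "nat \<Rightarrow> nat \<Rightarrow> (nat \<Rightarrow> complex) \<Rightarrow> nat \<Rightarrow> (nat \<Rightarrow> complex) \<Rightarrow> bool" where
  "inv4 q SB m0 a m \<longleftrightarrow> m 19 = of_nat a \<and> (\<forall>b<a. m (SB + b) = of_nat q) \<and> fr ({2,19} \<union> {SB..<SB + a}) m0 m"

lemma L4_body:
  assumes a: "a < LL" and m0: "m0 16 = of_nat LL" "m0 14 = of_nat SB" "m0 6 = 1" "m0 9 = of_nat q" "SB \<ge> 32"
    and inv: "inv4 q SB m0 a m"
  shows "reach prog (84, m) (\<lambda>s. fst s = 84 \<and> inv4 q SB m0 (Suc a) (snd s)) (Suc (Suc (Suc (Suc (Suc 0)))))"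
proof -
  have f: "m 19 = of_nat a" "\<forall>b<a. m (SB + b) = of_nat q" "fr ({2,19} \<union> {SB..<SB + a}) m0 m"
    using inv unfolding inv4_def by auto
  have g: "m 16 = of_nat LL" "m 14 = of_nat SB" "m 6 = 1" "m 9 = of_nat q" using f(3) m0 unfolding fr_def by auto
  have na: "\<not> LL \<le> a" using a by simp
  have ne: "SB + a \<noteq> 19" "19 \<noteq> SB + a" "SB + a \<noteq> 0" "0 \<noteq> SB + a" "SB + a \<noteq> 6" "6 \<noteq> SB + a" using m0(5) by auto
  show ?thesis
    apply (rule reach_step, simp add: step_simps f g na ne)+
    apply (rule reach_now)
    apply (simp add: inv4_def)
    using f m0(5) unfolding fr_def apply (auto simp: less_Suc_eq)
    done
qed

lemma L4_loop:
  assumes m0: "m0 16 = of_nat LL" "m0 14 = of_nat SB" "m0 6 = 1" "m0 9 = of_nat q" "SB \<ge> 32"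
    and inv: "inv4 q SB m0 0 m"
  shows "reach prog (84, m) (\<lambda>s. fst s = 89 \<and> inv4 q SB m0 LL (snd s)) (LL * 5 + 1)"
proof -
  have "reach prog (84, m) (\<lambda>s. fst s = 89 \<and> inv4 q SB m0 LL (snd s)) ((LL - 0) * Suc (Suc (Suc (Suc (Suc 0)))) + Suc 0)"
  proof (rule loop_rule[where I = "inv4 q SB m0" and n = LL])
    fix i m assume a: "i < LL" "inv4 q SB m0 i m"
    have "reach prog (84, m) (\<lambda>s. fst s = 84 \<and> inv4 q SB m0 (Suc i) (snd s)) (Suc (Suc (Suc (Suc (Suc 0)))))"
      by (rule L4_body[OF a(1) m0 a(2)])
    then show "reach prog (84, m) (\<lambda>s. fst s = 84 \<and> inv4 q SB m0 (Suc i) (snd s) \<or> fst s = 89 \<and> inv4 q SB m0 LL (snd s)) (Suc (Suc (Suc (Suc (Suc 0)))))"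
      by (rule reach_mono) auto
  next
    fix m assume a: "inv4 q SB m0 LL m"
    have g: "m 16 = of_nat LL" "m 19 = of_nat LL" using a m0 unfolding inv4_def fr_def by auto
    show "reach prog (84, m) (\<lambda>s. fst s = 89 \<and> inv4 q SB m0 LL (snd s)) (Suc 0)"
      apply (rule reach_step, simp add: step_simps g)
      apply (rule reach_now) using a by simp
  qed (use inv in auto)
  then show ?thesis by (rule reach_mono) auto
qed


lemma addr_numeral_mult[simp]: "addr (numeral a * of_nat b) = numeral a * b"
proof -
  have "numeral a * (of_nat b :: complex) = of_nat (numeral a * b)" by simp
  then show ?thesis by (simp only: addr_of_nat)
qed

lemma addr_add_one[simp]: "0 \<le> Re x \<Longrightarrow> addr (x + 1) = addr x + 1"
  using addr_add_nat[of x 1] by simp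

definition glob0 :: "nat \<Rightarrow> nat \<Rightarrow> nat \<Rightarrow> (nat list \<Rightarrow> nat \<Rightarrow> complex) \<Rightarrow> (nat \<Rightarrow> complex) \<Rightarrow> bool" where
  "glob0 k q r \<delta> m \<longleftrightarrow> m 5 = 0 \<and> m 6 = 1 \<and> m 8 = of_nat k \<and> m 9 = of_nat q \<and> m 11 = of_nat r
    \<and> m 12 = of_nat (TBa k r) \<and> m 13 = of_nat (IDBa k r) \<and> m 14 = of_nat (SBa k r) \<and> m 15 = of_nat (k ^ r)
    \<and> m 16 = of_nat (3 * r - 2) \<and> m 17 = of_nat (2 * r - 1)
    \<and> (\<forall>w\<in>words k r. \<forall>x<k. m (TBa k r + word_index k w * k + x) = \<delta> w x)"

lemma setup_post:
  assumes k: "k \<ge> 2" and r: "r \<ge> 1" and E: "E = EE k r"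
    and T: "\<forall>w\<in>words k r. \<forall>x<k. m (TBa k r + word_index k w * k + x) = \<delta> w x"
    and fr: "\<forall>a. 32 \<le> a \<longrightarrow> m' a = m a"
    and c: "m' 5 = 0" "m' 6 = 1" "m' 8 = of_nat k" "m' 9 = of_nat q"
      "m' 11 = of_nat E - 3 - of_nat (k ^ (r + 1))" "m' 12 = 65 * of_nat E - of_nat (k ^ (r + 1))"
      "m' 13 = 66 * of_nat E" "m' 14 = 67 * of_nat E" "m' 15 = of_nat (k ^ r)"
      "m' 16 = 3 * of_nat E - 3 * of_nat (k ^ (r + 1)) - 11"
      "m' 17 = 2 * of_nat E + (- 7 - 2 * of_nat (k ^ (r + 1)))" "m' 19 = 0"
  shows "glob0 k q r \<delta> m' \<and> m' 19 = 0 \<and> fr {0..<32} m m'"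
proof -
  note L = layout[OF k r]
  have Ee: "(of_nat E :: complex) = 3 + of_nat r + of_nat (k ^ (r + 1))" unfolding E EE_def by simp
  have r1: "(of_nat (3 * r - 2) :: complex) = 3 * of_nat r - 2" using r by (simp add: of_nat_diff)
  have r2: "(of_nat (2 * r - 1) :: complex) = 2 * of_nat r - 1" using r by (simp add: of_nat_diff)
  have T': "\<forall>w\<in>words k r. \<forall>x<k. m' (TBa k r + word_index k w * k + x) = \<delta> w x"
    using T fr L(7) L(1) by auto
  have h16: "m' 16 = of_nat (3 * r - 2)" unfolding r1 c(10) Ee by (simp add: algebra_simps)
  have h17: "m' 17 = of_nat (2 * r - 1)" unfolding r2 c(11) Ee by (simp add: algebra_simps)
  show ?thesis unfolding glob0_def
    using c T' fr Ee h16 h17 unfolding TBa_def IDBa_def SBa_def E fr_def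
    by (simp add: algebra_simps)
qed

lemma setup_seg:
  assumes k: "k \<ge> 2" and r: "r \<ge> 1" and E: "E = EE k r"
    and m: "m 3 = of_nat E" "m (65 * E) = of_nat k + \<i> * of_nat q" "m (Suc (65 * E)) = of_nat (k ^ (r + 1))"
      "\<forall>w\<in>words k r. \<forall>x<k. m (TBa k r + word_index k w * k + x) = \<delta> w x"
  shows "reach prog (44, m) (\<lambda>s. fst s = 78 \<and> glob0 k q r \<delta> (snd s) \<and> snd s 19 = 0 \<and> fr {0..<32} m (snd s))
    (Suc (Suc (Suc (Suc (Suc (Suc (Suc (Suc (Suc (Suc (Suc (Suc (Suc (Suc (Suc (Suc (Suc (Suc (Suc (Suc (Suc (Suc (Suc (Suc (Suc (Suc (Suc (Suc (Suc (Suc (Suc (Suc (Suc (Suc 0))))))))))))))))))))))))))))))))))"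
proof -
  note L = layout[OF k r]
  have E8: "E \<ge> 8" using L(1) E by simp
  have ne: "65 * E \<noteq> 0" "65 * E \<noteq> 1" "65 * E \<noteq> 2" "65 * E \<noteq> 3" "65 * E \<noteq> 4" "65 * E \<noteq> 5" "65 * E \<noteq> 6" "65 * E \<noteq> 7" "65 * E \<noteq> 8" "65 * E \<noteq> 9" "65 * E \<noteq> 10" "65 * E \<noteq> 11" "65 * E \<noteq> 12" "65 * E \<noteq> 13" "65 * E \<noteq> 14" "65 * E \<noteq> 15" "65 * E \<noteq> 16" "65 * E \<noteq> 17" "65 * E \<noteq> 18" "65 * E \<noteq> 19" "65 * E \<noteq> 20" "65 * E \<noteq> 21" "65 * E \<noteq> 22" "65 * E \<noteq> 23" "65 * E \<noteq> 24" "65 * E \<noteq> 25" "65 * E \<noteq> 26" "65 * E \<noteq> 27" "65 * E \<noteq> 28" "65 * E \<noteq> 29" "65 * E \<noteq> 30" "65 * E \<noteq> 31"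
    "E \<noteq> 0" "0 < E" "k \<noteq> 0" "0 < k"
    using E8 k by auto
  show ?thesis
    apply (rule reach_step, simp add: step_simps m ne)+
    apply (rule reach_now)
    apply (simp only: fst_conv snd_conv simp_thms)
    apply (rule setup_post[OF k r E m(4)])
    using E8 apply (simp_all add: ne)
    done
qed


lemma sw_rep: "r \<ge> 1 \<Longrightarrow> sw q r (replicate r q) = replicate (3 * r - 2) q"
  unfolding sw_def by (simp add: replicate_add[symmetric])

lemma mid_seg:
  assumes k: "k \<ge> 2" and r: "r \<ge> 1" and q: "q < k" and E: "E = EE k r"
    and m: "m 3 = of_nat E" "m (65 * E) = of_nat k + \<i> * of_nat q" "m (Suc (65 * E)) = of_nat (k ^ (r + 1))"
      "\<forall>w\<in>words k r. \<forall>x<k. m (TBa k r + word_index k w * k + x) = \<delta> w x"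
  shows "reach prog (44, m) (\<lambda>s. fst s = 90 \<and> inv5 k q r \<delta> 0 (snd s))
    (34 + (k ^ r * 5 + 1) + Suc 0 + ((3 * r - 2) * 5 + 1) + Suc 0)"
proof -
  note L = layout[OF k r]
  define IDB where "IDB = IDBa k r"
  define SB where "SB = SBa k r"
  have B: "IDB \<ge> 32" "SB \<ge> 32" "IDB + k ^ r \<le> SB" unfolding IDB_def SB_def IDBa_def SBa_def using L by auto
  let ?P1 = "\<lambda>s. fst s = 78 \<and> glob0 k q r \<delta> (snd s) \<and> snd s 19 = 0 \<and> fr {0..<32} m (snd s)"
  have r1: "reach prog (44, m) ?P1 34"
    using setup_seg[OF k r E m] by (simp add: numeral_eq_Suc)
  let ?P2 = "\<lambda>s. fst s = 83 \<and> glob0 k q r \<delta> (snd s) \<and> (\<forall>a<k ^ r. snd s (IDB + a) = of_nat a)"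
  have r2: "reach prog s1 ?P2 (k ^ r * 5 + 1)" if H: "?P1 s1" for s1
  proof -
    obtain m1 where s1: "s1 = (78, m1)" "glob0 k q r \<delta> m1" "m1 19 = 0"
      using H by (cases s1) auto
    have g1: "m1 15 = of_nat (k ^ r)" "m1 13 = of_nat IDB" "m1 6 = 1" using s1(2) unfolding glob0_def IDB_def by auto
    have i0: "inv3 IDB m1 0 m1" unfolding inv3_def using s1(3) by (simp add: fr_refl)
    have Lp: "reach prog (78, m1) (\<lambda>s. fst s = 83 \<and> inv3 IDB m1 (k ^ r) (snd s)) (k ^ r * 5 + 1)"
      by (rule L3_loop[OF g1 B(1) i0])
    show ?thesis unfolding s1(1)
    proof (rule reach_mono[OF Lp order_refl])
      fix s assume a: "fst s = 83 \<and> inv3 IDB m1 (k ^ r) (snd s)"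
      then have f: "fr ({2,19} \<union> {IDB..<IDB + k ^ r}) m1 (snd s)" "\<forall>b<k ^ r. snd s (IDB + b) = of_nat b"
        unfolding inv3_def by auto
      have "glob0 k q r \<delta> (snd s)"
      proof -
        have regs: "snd s a = m1 a" if "a \<in> {5,6,8,9,11,12,13,14,15,16,17}" for a
          using f(1) that B(1) unfolding fr_def by auto
        have tab: "snd s (TBa k r + word_index k w * k + x) = m1 (TBa k r + word_index k w * k + x)"
          if "w \<in> words k r" "x < k" for w x
        proof -
          have "word_index k w * k + x < k ^ (r + 1)" by (rule table_addr_bound[OF k that])
          then have "TBa k r + word_index k w * k + x \<notin> {2,19} \<union> {IDB..<IDB + k ^ r}"
            using L unfolding IDB_def IDBa_def by auto
          then show ?thesis using f(1) unfolding fr_def by auto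
        qed
        show ?thesis using s1(2) regs tab unfolding glob0_def by simp
      qed
      then show "fst s = 83 \<and> glob0 k q r \<delta> (snd s) \<and> (\<forall>a<k ^ r. snd s (IDB + a) = of_nat a)"
        using a f(2) by simp
    qed
  qed
  let ?P3 = "\<lambda>s. fst s = 84 \<and> glob0 k q r \<delta> (snd s) \<and> (\<forall>a<k ^ r. snd s (IDB + a) = of_nat a) \<and> snd s 19 = 0"
  have r3: "reach prog s2 ?P3 (Suc 0)" if H: "?P2 s2" for s2
  proof -
    obtain m2 where s2: "s2 = (83, m2)" "glob0 k q r \<delta> m2" "\<forall>a<k ^ r. m2 (IDB + a) = of_nat a"
      using H by (cases s2) auto
    have "glob0 k q r \<delta> (m2(19 := 0))"
    proof -
      have "\<forall>w\<in>words k r. \<forall>x<k. TBa k r + word_index k w * k + x \<noteq> 19" using L unfolding TBa_def by auto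
      then show ?thesis using s2(2) unfolding glob0_def by simp
    qed
    moreover have "\<forall>a<k ^ r. (m2(19 := 0)) (IDB + a) = of_nat a" using s2(3) B(1) by simp
    ultimately show ?thesis unfolding s2(1)
      apply -
      apply (rule reach_step, simp add: step_simps)
      apply (rule reach_now) by simp
  qed
  let ?P4 = "\<lambda>s. fst s = 89 \<and> glob k q r \<delta> (snd s) \<and> arr q r SB (snd s) (replicate r q)"
  have r4: "reach prog s3 ?P4 ((3 * r - 2) * 5 + 1)" if H: "?P3 s3" for s3
  proof -
    obtain m3 where s3: "s3 = (84, m3)" "glob0 k q r \<delta> m3" "\<forall>a<k ^ r. m3 (IDB + a) = of_nat a" "m3 19 = 0"
      using H by (cases s3) auto
    have g3: "m3 16 = of_nat (3 * r - 2)" "m3 14 = of_nat SB" "m3 6 = 1" "m3 9 = of_nat q"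
      using s3(2) unfolding glob0_def SB_def by auto
    have i0: "inv4 q SB m3 0 m3" unfolding inv4_def using s3(4) by (simp add: fr_refl)
    have Lp: "reach prog (84, m3) (\<lambda>s. fst s = 89 \<and> inv4 q SB m3 (3 * r - 2) (snd s)) ((3 * r - 2) * 5 + 1)"
      by (rule L4_loop[OF g3 B(2) i0])
    show ?thesis unfolding s3(1)
    proof (rule reach_mono[OF Lp order_refl])
      fix s assume a: "fst s = 89 \<and> inv4 q SB m3 (3 * r - 2) (snd s)"
      then have f: "fr ({2,19} \<union> {SB..<SB + (3 * r - 2)}) m3 (snd s)" "\<forall>b<3 * r - 2. snd s (SB + b) = of_nat q"
        unfolding inv4_def by auto
      have "glob k q r \<delta> (snd s)"
      proof -
        have regs: "snd s a = m3 a" if "a \<in> {5,6,8,9,11,12,13,14,15,16,17}" for a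
          using f(1) that B(2) unfolding fr_def by auto
        have tab: "snd s (TBa k r + word_index k w * k + x) = m3 (TBa k r + word_index k w * k + x)"
          if "w \<in> words k r" "x < k" for w x
        proof -
          have "word_index k w * k + x < k ^ (r + 1)" by (rule table_addr_bound[OF k that])
          then have "TBa k r + word_index k w * k + x \<notin> {2,19} \<union> {SB..<SB + (3 * r - 2)}"
            using L unfolding SB_def SBa_def by auto
          then show ?thesis using f(1) unfolding fr_def by auto
        qed
        have idt: "snd s (IDB + a) = m3 (IDB + a)" if "a < k ^ r" for a
        proof -
          have "IDB + a \<notin> {2,19} \<union> {SB..<SB + (3 * r - 2)}" using B that by auto
          then show ?thesis using f(1) unfolding fr_def by auto
        qed
        show ?thesis using s3(2,3) regs tab idt unfolding glob0_def glob_def IDB_def by simp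
      qed
      moreover have "arr q r SB (snd s) (replicate r q)"
        unfolding arr_def sw_rep[OF r] using f(2) by simp
      ultimately show "fst s = 89 \<and> glob k q r \<delta> (snd s) \<and> arr q r SB (snd s) (replicate r q)"
        using a by simp
    qed
  qed
  have r5: "reach prog s4 (\<lambda>s. fst s = 90 \<and> inv5 k q r \<delta> 0 (snd s)) (Suc 0)" if H: "?P4 s4" for s4
  proof -
    obtain m4 where s4: "s4 = (89, m4)" "glob k q r \<delta> m4" "arr q r SB m4 (replicate r q)"
      using H by (cases s4) auto
    have "glob k q r \<delta> (m4(19 := 0))"
      by (rule glob_fr[OF k r s4(2), of "{19}"]) (auto simp: fr_def Rmain_def)
    moreover have "arr q r SB (m4(19 := 0)) (replicate r q)" using s4(3) B(2) unfolding arr_def by simp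
    moreover have "replicate r q \<in> words k r" using q unfolding words_def by (auto simp: in_set_replicate)
    ultimately show ?thesis unfolding s4(1)
      apply -
      apply (rule reach_step, simp add: step_simps)
      apply (rule reach_now) apply (simp add: inv5_def SB_def) by blast
  qed
  show ?thesis
    by (rule reach_seq[OF reach_seq[OF reach_seq[OF reach_seq[OF r1 r2] r3] r4] r5])
qed


lemma init_regs:
  assumes "length N = r"
  shows "init_mem k q N \<delta> 0 = of_nat k" "init_mem k q N \<delta> 1 = of_nat r" "init_mem k q N \<delta> 2 = of_nat q"
  using assms unfolding init_mem_def by (simp_all add: Let_def)

lemma init_table:
  assumes r: "length N = r" and w: "w \<in> words k r" and x: "x < k"
  shows "init_mem k q N \<delta> (3 + r + word_index k w * k + x) = \<delta> w x"
proof -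
  let ?a = "3 + r + word_index k w * k + x"
  have ex: "\<exists>w\<in>words k r. \<exists>x<k. ?a = 3 + r + word_index k w * k + x" using w x by blast
  have uniq: "(THE z. \<exists>w'\<in>words k r. \<exists>x'<k. ?a = 3 + r + word_index k w' * k + x' \<and> z = \<delta> w' x') = \<delta> w x"
  proof (rule the_equality)
    show "\<exists>w'\<in>words k r. \<exists>x'<k. ?a = 3 + r + word_index k w' * k + x' \<and> \<delta> w x = \<delta> w' x'"
      using w x by blast
  next
    fix z assume "\<exists>w'\<in>words k r. \<exists>x'<k. ?a = 3 + r + word_index k w' * k + x' \<and> z = \<delta> w' x'"
    then obtain w' x' where h: "w' \<in> words k r" "x' < k" "word_index k w * k + x = word_index k w' * k + x'" "z = \<delta> w' x'"
      by auto
    have "(word_index k w * k + x) div k = word_index k w" "(word_index k w * k + x) mod k = x" using x by auto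
    moreover have "(word_index k w' * k + x') div k = word_index k w'" "(word_index k w' * k + x') mod k = x'" using h(2) by auto
    ultimately have "word_index k w = word_index k w'" "x = x'" using h(3) by metis+
    then have "w = w'" using digits_word_index[OF w] digits_word_index[OF h(1)] by metis
    then show "z = \<delta> w x" using h \<open>x = x'\<close> by simp
  qed
  show ?thesis unfolding init_mem_def Let_def r using ex uniq by simp
qed

lemma inc_trick[simp]: "(c::complex) \<noteq> 0 \<Longrightarrow> (x * c + c) / c = x + 1"
  by (simp add: field_simps)

definition inv1 :: "nat \<Rightarrow> nat \<Rightarrow> nat \<Rightarrow> (nat \<Rightarrow> complex) \<Rightarrow> nat \<Rightarrow> (nat \<Rightarrow> complex) \<Rightarrow> bool" where
  "inv1 k q r mi j m \<longleftrightarrow> m 0 = of_nat k \<and> m 1 = of_nat r + \<i> * of_nat q \<and> m 2 = of_nat (k ^ j) \<and> m 3 = of_nat j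
     \<and> fr {1,2,3} mi m"

lemma prog_1S: "prog ! Suc 0 = JmpEq 0 3 139" using prog_1 by simp

lemma Suc_Suc_0: "Suc (Suc 0) = 2" by simp


lemma A1_seg:
  assumes k: "k \<ge> 2" and m: "m 0 = of_nat k" "m (Suc 0) = of_nat r" "m 2 = of_nat q"
  shows "reach prog (0, m) (\<lambda>s. fst s = 7 \<and> inv1 k q r m 0 (snd s)) (Suc (Suc (Suc (Suc (Suc (Suc (Suc 0)))))))"
proof -
  have k1: "k \<noteq> 1" "k \<noteq> 0" "k \<noteq> Suc 0" using k by auto
  show ?thesis
    apply ((rule reach_step | rule reach_step_num), simp add: step_simps m k1 prog_1S Suc_Suc_0)+
    apply (rule reach_now)
    using m apply (simp add: inv1_def fr_def One_nat_def)
    done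
qed

lemma L1_body:
  assumes k: "k \<ge> 2" and j: "j < r + 1" and inv: "inv1 k q r mi j m"
  shows "reach prog (7, m) (\<lambda>s. fst s = 7 \<and> inv1 k q r mi (Suc j) (snd s)) (Suc (Suc (Suc (Suc (Suc (Suc 0))))))"
proof -
  have f: "m 0 = of_nat k" "m (Suc 0) = of_nat r + \<i> * of_nat q" "m 2 = of_nat (k ^ j)" "m 3 = of_nat j" "fr {1,2,3} mi m"
    using inv unfolding inv1_def by auto
  have jr: "j \<le> r" using j by simp
  have k0: "k \<noteq> 0" using k by simp
  show ?thesis
    apply ((rule reach_step | rule reach_step_num), simp add: step_simps f jr k0 prog_1S Suc_Suc_0)+
    apply (rule reach_now)
    using f apply (simp add: inv1_def fr_def One_nat_def)
    done
qed



lemma L1_exit: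
  assumes inv: "inv1 k q r mi (r + 1) m"
  shows "reach prog (7, m) (\<lambda>s. fst s = 14 \<and> inv1 k q r mi (r + 1) (snd s)) (Suc (Suc 0))"
proof -
  have f: "m (Suc 0) = of_nat r + \<i> * of_nat q" "m 3 = of_nat (r + 1)"
    using inv unfolding inv1_def by auto
  show ?thesis
    apply ((rule reach_step | rule reach_step_num), simp add: step_simps f)+
    apply (rule reach_now) using inv by simp
qed

lemma L1_loop:
  assumes k: "k \<ge> 2" and inv: "inv1 k q r mi 0 m"
  shows "reach prog (7, m) (\<lambda>s. fst s = 14 \<and> inv1 k q r mi (r + 1) (snd s)) ((r + 1) * 6 + 2)"
proof -
  have "reach prog (7, m) (\<lambda>s. fst s = 14 \<and> inv1 k q r mi (r + 1) (snd s)) ((r + 1 - 0) * Suc (Suc (Suc (Suc (Suc (Suc 0))))) + Suc (Suc 0))"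
  proof (rule loop_rule[where I = "inv1 k q r mi" and n = "r + 1"])
    fix i m assume a: "i < r + 1" "inv1 k q r mi i m"
    have "reach prog (7, m) (\<lambda>s. fst s = 7 \<and> inv1 k q r mi (Suc i) (snd s)) (Suc (Suc (Suc (Suc (Suc (Suc 0))))))"
      by (rule L1_body[OF k a])
    then show "reach prog (7, m) (\<lambda>s. fst s = 7 \<and> inv1 k q r mi (Suc i) (snd s) \<or> fst s = 14 \<and> inv1 k q r mi (r + 1) (snd s)) (Suc (Suc (Suc (Suc (Suc (Suc 0))))))"
      by (rule reach_mono) auto
  next
    fix m assume a: "inv1 k q r mi (r + 1) m"
    show "reach prog (7, m) (\<lambda>s. fst s = 14 \<and> inv1 k q r mi (r + 1) (snd s)) (Suc (Suc 0))"
      by (rule L1_exit[OF a])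
  qed (use inv in auto)
  then show ?thesis by (rule reach_mono) auto
qed

lemma A2a_seg:
  assumes k: "k \<ge> 2" and E: "E = EE k r" and inv: "inv1 k q r mi (r + 1) m"
  shows "reach prog (14, m) (\<lambda>s. fst s = 26 \<and> snd s 0 = of_nat k \<and> snd s 1 = of_nat k + \<i> * of_nat q
      \<and> snd s 2 = of_nat (k ^ (r + 1)) \<and> snd s 3 = of_nat E \<and> fr {1,2,3} mi (snd s)) 12"
proof -
  have f: "m 0 = of_nat k" "m (Suc 0) = of_nat r + \<i> * of_nat q" "m 2 = of_nat (k ^ (r + 1))" "m 3 = of_nat (r + 1)"
    "fr {1,2,3} mi m"
    using inv unfolding inv1_def by auto
  have k0: "k \<noteq> 0" using k by simp
  show ?thesis
    apply ((rule reach_step | rule reach_step_num), simp add: step_simps f k0)+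
    apply (rule reach_now)
    using f apply (simp add: fr_def One_nat_def E EE_def)
    done
qed


definition inv2 :: "nat \<Rightarrow> nat \<Rightarrow> nat \<Rightarrow> nat \<Rightarrow> nat \<Rightarrow> (nat \<Rightarrow> complex) \<Rightarrow> nat \<Rightarrow> (nat \<Rightarrow> complex) \<Rightarrow> bool" where
  "inv2 k q r E p mi i m \<longleftrightarrow> m 3 = of_nat E \<and> m 2 = of_nat (3 + r + i) \<and> m (65 * E) = of_nat k + \<i> * of_nat q
     \<and> m (Suc (65 * E)) = of_nat p \<and> (\<forall>a<i. m (64 * E + (3 + r + a)) = mi (3 + r + a))
     \<and> fr ({0,1,2,3,65 * E, Suc (65 * E)} \<union> {64 * E + (3 + r)..<64 * E + (3 + r) + i}) mi m"

lemma A2b_seg: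
  assumes k: "k \<ge> 2" and r: "r \<ge> 1" and E: "E = EE k r"
    and m: "m 0 = of_nat k" "m 1 = of_nat k + \<i> * of_nat q" "m 2 = of_nat (k ^ (r + 1))" "m 3 = of_nat E" "fr {1,2,3} mi m"
  shows "reach prog (26, m) (\<lambda>s. fst s = 34 \<and> inv2 k q r E (k ^ (r + 1)) mi 0 (snd s)) 8"
proof -
  note L = layout[OF k r]
  have E8: "E \<ge> 8" using L(1) E by simp
  have ne: "65 * E \<noteq> 0" "65 * E \<noteq> 1" "65 * E \<noteq> 2" "65 * E \<noteq> 3" "E \<noteq> 0" "0 < E" "Suc 0 \<noteq> 65 * E"
    using E8 by auto
  have m1: "m (Suc 0) = of_nat k + \<i> * of_nat q" using m(2) by simp
  show ?thesis
    apply ((rule reach_step | rule reach_step_num), simp add: step_simps m m1 ne)+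
    apply (rule reach_now)
    using m apply (simp add: inv2_def fr_def One_nat_def E EE_def)
    done
qed


lemma L2_post:
  assumes inv: "inv2 k q r E p mi i m" and src: "src = 3 + r + i" and i: "i < p" and E: "E = 3 + r + p"
    and c: "m' 3 = m 3" "m' 2 = of_nat src + 1" "m' (64 * E + src) = mi src"
      "\<forall>a. a \<notin> {0,1,2,64 * E + src} \<longrightarrow> m' a = m a"
  shows "inv2 k q r E p mi (Suc i) m'"
proof -
  have f: "m 3 = of_nat E" "m (65 * E) = of_nat k + \<i> * of_nat q" "m (Suc (65 * E)) = of_nat p"
    "\<forall>a<i. m (64 * E + (3 + r + a)) = mi (3 + r + a)"
    "fr ({0,1,2,3,65 * E, Suc (65 * E)} \<union> {64 * E + (3 + r)..<64 * E + (3 + r) + i}) mi m"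
    using inv unfolding inv2_def by auto
  have ne: "64 * E + src \<noteq> 65 * E" "64 * E + src \<noteq> Suc (65 * E)" "64 * E + src \<noteq> 0" "64 * E + src \<noteq> 1" "64 * E + src \<noteq> 2"
    using src i E by auto
  show ?thesis unfolding inv2_def
  proof (intro conjI)
    show "m' 3 = of_nat E" using c f by simp
    show "m' 2 = of_nat (3 + r + Suc i)" using c src by simp
    show "m' (65 * E) = of_nat k + \<i> * of_nat q" using c(4) f(2) ne E by auto
    show "m' (Suc (65 * E)) = of_nat p" using c(4) f(3) ne E by auto
    show "\<forall>a<Suc i. m' (64 * E + (3 + r + a)) = mi (3 + r + a)"
    proof (intro allI impI)
      fix a assume a: "a < Suc i"
      show "m' (64 * E + (3 + r + a)) = mi (3 + r + a)"
      proof (cases "a = i")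
        case True then show ?thesis using c(3) src by simp
      next
        case False
        then have "a < i" using a by simp
        moreover have "64 * E + (3 + r + a) \<notin> {0,1,2,64 * E + src}" using src \<open>a < i\<close> by auto
        ultimately show ?thesis using c(4) f(4) by auto
      qed
    qed
    show "fr ({0,1,2,3,65 * E, Suc (65 * E)} \<union> {64 * E + (3 + r)..<64 * E + (3 + r) + Suc i}) mi m'"
      using c(4) f(5) src unfolding fr_def by auto
  qed
qed

lemma L2_body:
  assumes k: "k \<ge> 2" and r: "r \<ge> 1" and E: "E = 3 + r + p" and p: "p \<ge> 1" and i: "i < p"
    and inv: "inv2 k q r E p mi i m"
  shows "reach prog (34, m) (\<lambda>s. fst s = 34 \<and> inv2 k q r E p mi (Suc i) (snd s)) 10"
proof -
  define src where "src = 3 + r + i"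
  have f: "m 3 = of_nat E" "m 2 = of_nat src"
    "fr ({0,1,2,3,65 * E, Suc (65 * E)} \<union> {64 * E + (3 + r)..<64 * E + (3 + r) + i}) mi m"
    using inv unfolding inv2_def src_def by auto
  have ms: "m src = mi src"
  proof -
    have "src \<notin> {0,1,2,3,65 * E, Suc (65 * E)} \<union> {64 * E + (3 + r)..<64 * E + (3 + r) + i}"
      using src_def E i r by auto
    then show ?thesis using f(3) unfolding fr_def by auto
  qed
  have ns: "\<not> E \<le> src" using src_def E i by simp
  have ne: "E \<noteq> 0" "64 * E + src \<noteq> 0" "64 * E + src \<noteq> 2" "64 * E + src \<noteq> 3" "0 < E"
    "64 * E + src \<noteq> 1" "64 * E + src \<noteq> Suc 0"
    using E src_def by auto
  show ?thesis
    apply ((rule reach_step | rule reach_step_num), simp add: step_simps f ms ns ne)+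
    apply (rule reach_now)
    apply (simp only: fst_conv snd_conv simp_thms)
    apply (rule L2_post[OF inv src_def i E])
    apply (simp_all add: ne)
    done
qed


lemma L2_loop:
  assumes k: "k \<ge> 2" and r: "r \<ge> 1" and E: "E = 3 + r + p" and p: "p \<ge> 1"
    and inv: "inv2 k q r E p mi 0 m"
  shows "reach prog (34, m) (\<lambda>s. fst s = 44 \<and> inv2 k q r E p mi p (snd s)) (p * 10 + 1)"
proof -
  have "reach prog (34, m) (\<lambda>s. fst s = 44 \<and> inv2 k q r E p mi p (snd s)) ((p - 0) * 10 + Suc 0)"
  proof (rule loop_rule[where I = "inv2 k q r E p mi" and n = p])
    fix i m assume a: "i < p" "inv2 k q r E p mi i m"
    have "reach prog (34, m) (\<lambda>s. fst s = 34 \<and> inv2 k q r E p mi (Suc i) (snd s)) 10"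
      by (rule L2_body[OF k r E p a])
    then show "reach prog (34, m) (\<lambda>s. fst s = 34 \<and> inv2 k q r E p mi (Suc i) (snd s) \<or> fst s = 44 \<and> inv2 k q r E p mi p (snd s)) 10"
      by (rule reach_mono) auto
  next
    fix m assume a: "inv2 k q r E p mi p m"
    have g: "m 3 = of_nat E" "m 2 = of_nat (3 + r + p)" using a unfolding inv2_def by auto
    show "reach prog (34, m) (\<lambda>s. fst s = 44 \<and> inv2 k q r E p mi p (snd s)) (Suc 0)"
      apply (rule reach_step, simp add: step_simps g E)
      apply (rule reach_now) using a E by simp
  qed (use inv in auto)
  then show ?thesis by simp
qed

definition Tot :: "nat \<Rightarrow> nat \<Rightarrow> nat" where
  "Tot k r = 7 + ((r + 1) * 6 + 2) + 12 + 8 + (k ^ (r + 1) * 10 + 1)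
     + (34 + (k ^ r * 5 + 1) + Suc 0 + ((3 * r - 2) * 5 + 1) + Suc 0) + (k ^ r * B5 k r + 2)"

lemma run_main:
  assumes s: "simple_lqca k q N \<delta>" and k: "k \<ge> 2"
  shows "reach prog (0, init_mem k q N \<delta>) (Fin k q (length N) \<delta>) (Tot k (length N))"
proof -
  define r where "r = length N"
  define mi where "mi = init_mem k q N \<delta>"
  define p where "p = k ^ (r + 1)"
  define E where "E = EE k r"
  have lq: "lqca k q N \<delta>" using s unfolding simple_lqca_def by auto
  have r1: "r \<ge> 1" using lq unfolding lqca_def r_def by (cases N) auto
  have q: "q < k" using lq unfolding lqca_def by auto
  have Ep: "E = 3 + r + p" unfolding E_def EE_def p_def by simp
  have p1: "p \<ge> 1" unfolding p_def using k by simp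
  have mi: "mi 0 = of_nat k" "mi (Suc 0) = of_nat r" "mi 2 = of_nat q"
    using init_regs[of N r k q \<delta>] unfolding mi_def r_def by auto
  have s1: "reach prog (0, mi) (\<lambda>s. fst s = 7 \<and> inv1 k q r mi 0 (snd s)) 7"
    using A1_seg[OF k mi] by (simp add: numeral_eq_Suc)
  have s2: "reach prog s' (\<lambda>s. fst s = 14 \<and> inv1 k q r mi (r + 1) (snd s)) ((r + 1) * 6 + 2)"
    if "fst s' = 7 \<and> inv1 k q r mi 0 (snd s')" for s'
    using L1_loop[OF k, of q r mi "snd s'"] that by (cases s') auto
  have s3: "reach prog s' (\<lambda>s. fst s = 26 \<and> snd s 0 = of_nat k \<and> snd s 1 = of_nat k + \<i> * of_nat q
      \<and> snd s 2 = of_nat (k ^ (r + 1)) \<and> snd s 3 = of_nat E \<and> fr {1,2,3} mi (snd s)) 12"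
    if "fst s' = 14 \<and> inv1 k q r mi (r + 1) (snd s')" for s'
    using A2a_seg[OF k E_def, of q mi "snd s'"] that by (cases s') auto
  have s4: "reach prog s' (\<lambda>s. fst s = 34 \<and> inv2 k q r E p mi 0 (snd s)) 8"
    if "fst s' = 26 \<and> snd s' 0 = of_nat k \<and> snd s' 1 = of_nat k + \<i> * of_nat q
      \<and> snd s' 2 = of_nat (k ^ (r + 1)) \<and> snd s' 3 = of_nat E \<and> fr {1,2,3} mi (snd s')" for s'
    using A2b_seg[OF k r1 E_def, of "snd s'" q mi] that unfolding p_def by (cases s') auto
  have s5: "reach prog s' (\<lambda>s. fst s = 44 \<and> inv2 k q r E p mi p (snd s)) (p * 10 + 1)"
    if "fst s' = 34 \<and> inv2 k q r E p mi 0 (snd s')" for s'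
    using L2_loop[OF k r1 Ep p1, of q mi "snd s'"] that by (cases s') auto
  have s6: "reach prog s' (Fin k q r \<delta>)
     ((34 + (k ^ r * 5 + 1) + Suc 0 + ((3 * r - 2) * 5 + 1) + Suc 0) + (k ^ r * B5 k r + 2))"
    if H: "fst s' = 44 \<and> inv2 k q r E p mi p (snd s')" for s'
  proof -
    obtain m where sm: "s' = (44, m)" "inv2 k q r E p mi p m" using H by (cases s') auto
    have f: "m 3 = of_nat E" "m (65 * E) = of_nat k + \<i> * of_nat q" "m (Suc (65 * E)) = of_nat (k ^ (r + 1))"
      "\<forall>a<p. m (64 * E + (3 + r + a)) = mi (3 + r + a)"
      using sm(2) unfolding inv2_def p_def by auto
    have T: "\<forall>w\<in>words k r. \<forall>x<k. m (TBa k r + word_index k w * k + x) = \<delta> w x"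
    proof (intro ballI allI impI)
      fix w x assume wx: "w \<in> words k r" "x < k"
      have a: "word_index k w * k + x < p" unfolding p_def by (rule table_addr_bound[OF k wx])
      have e: "TBa k r + word_index k w * k + x = 64 * E + (3 + r + (word_index k w * k + x))"
        unfolding TBa_def E_def by simp
      have "m (64 * E + (3 + r + (word_index k w * k + x))) = mi (3 + r + (word_index k w * k + x))"
        using f(4) a by blast
      then have "m (TBa k r + word_index k w * k + x) = mi (3 + r + (word_index k w * k + x))"
        unfolding e .
      also have "\<dots> = \<delta> w x" unfolding mi_def using init_table[OF r_def[symmetric] wx] by (simp add: add.assoc)
      finally show "m (TBa k r + word_index k w * k + x) = \<delta> w x" .
    qed
    have M: "reach prog (44, m) (\<lambda>s. fst s = 90 \<and> inv5 k q r \<delta> 0 (snd s))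
      (34 + (k ^ r * 5 + 1) + Suc 0 + ((3 * r - 2) * 5 + 1) + Suc 0)"
      by (rule mid_seg[OF k r1 q E_def f(1,2,3) T])
    show ?thesis unfolding sm(1)
    proof (rule reach_seq[OF M])
      fix s'' :: state assume "fst s'' = 90 \<and> inv5 k q r \<delta> 0 (snd s'')"
      then show "reach prog s'' (Fin k q r \<delta>) (k ^ r * B5 k r + 2)"
        using L5_loop[OF k r1 q, of \<delta> "snd s''"] by (cases s'') auto
    qed
  qed
  have "reach prog (0, mi) (Fin k q r \<delta>) (7 + ((r + 1) * 6 + 2) + 12 + 8 + (p * 10 + 1)
     + ((34 + (k ^ r * 5 + 1) + Suc 0 + ((3 * r - 2) * 5 + 1) + Suc 0) + (k ^ r * B5 k r + 2)))"
    by (rule reach_seq[OF reach_seq[OF reach_seq[OF reach_seq[OF reach_seq[OF s1 s2] s3] s4] s5] s6])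
  then show ?thesis unfolding Tot_def mi_def r_def p_def by (simp add: add.assoc)
qed


lemma sq_le_pow2: "r * r \<le> 4 * 2 ^ r"
proof (induction r rule: less_induct)
  case (less r)
  show ?case
  proof (cases "r \<le> 3")
    case True
    then have "r = 0 \<or> r = 1 \<or> r = 2 \<or> r = 3" by auto
    then show ?thesis by auto
  next
    case False
    then obtain s where s: "r = Suc s" "s \<ge> 3" by (cases r) auto
    have ih: "s * s \<le> 4 * 2 ^ s" using less s by simp
    have "r * r = s * s + 2 * s + 1" using s by simp
    also have "\<dots> \<le> 2 * (s * s)" using s(2)
    proof -
      have "3 * s \<le> s * s" using mult_le_mono1[OF s(2), of s] by simp
      then have "2 * s + 1 \<le> s * s" using s(2) by linarith
      then show ?thesis by simp
    qed
    also have "\<dots> \<le> 2 * (4 * 2 ^ s)" using ih by simp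
    also have "\<dots> = 4 * 2 ^ r" using s by simp
    finally show ?thesis .
  qed
qed

lemma Tot_bound:
  assumes k: "k \<ge> 2" and r: "r \<ge> 1"
  shows "Tot k r \<le> 300 * (k ^ (r + 1))\<^sup>2"
proof -
  define K where "K = k ^ r"
  define p where "p = k ^ (r + 1)"
  have pK: "p = k * K" unfolding p_def K_def by simp
  have K1: "K \<ge> 1" unfolding K_def using k by simp
  have k1: "k \<ge> 1" using k by simp
  have rK: "r \<le> K" unfolding K_def using pow_ge[OF k, of r] by simp
  have rr: "r * r \<le> 4 * K"
  proof -
    have "(2::nat) ^ r \<le> k ^ r" using k by (intro power_mono) auto
    then show ?thesis using sq_le_pow2[of r] unfolding K_def by simp
  qed
  define c where "c = p * p"
  have c_eq: "c = k * (k * (K * K))" unfolding c_def pK by (simp add: algebra_simps)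
  have a1: "K \<le> K * K" using mult_le_mono2[OF K1, of K] by simp
  have a2: "K * K \<le> k * (K * K)" using mult_le_mono1[OF k1, of "K * K"] by simp
  have a3: "k * (K * K) \<le> c" unfolding c_eq using mult_le_mono1[OF k1, of "k * (K * K)"] by simp
  have Kp: "K \<le> p" unfolding pK using mult_le_mono1[OF k1, of K] by simp
  have pc: "p \<le> c" unfolding c_def using mult_le_mono2[of 1 p p] K1 k1 pK
    by (metis le_trans Kp mult_1_right)
  have c1: "1 \<le> c" using K1 a1 a2 a3 by linarith
  have B: "B5 k r \<le> 12 + 37 * r + 14 * (r * r) + 16 * (r * k)"
  proof -
    have m: "(2 * r - 1) * (4 + (r * 7 + 1) + (4 + (k * 8 + 1) + 3)) \<le> (2 * r) * (7 * r + 8 * k + 13)"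
      by (rule mult_le_mono) simp_all
    have e: "(2 * r) * (7 * r + 8 * k + 13) = 14 * (r * r) + 16 * (r * k) + 26 * r" by (simp add: algebra_simps)
    show ?thesis unfolding B5_def using m e by simp
  qed
  have KB: "K * B5 k r \<le> 121 * c"
  proof -
    have "K * B5 k r \<le> K * (12 + 37 * r + 14 * (r * r) + 16 * (r * k))" by (rule mult_le_mono2[OF B])
    also have "\<dots> = 12 * K + 37 * (r * K) + 14 * (r * r * K) + 16 * (r * k * K)" by (simp add: algebra_simps)
    also have "\<dots> \<le> 12 * c + 37 * c + 14 * (4 * c) + 16 * c"
    proof -
      have b1: "r * K \<le> K * K" by (rule mult_le_mono1[OF rK])
      have b2: "r * r * K \<le> 4 * K * K" using mult_le_mono1[OF rr, of K] by simp
      have b3: "r * k * K \<le> k * (K * K)" using mult_le_mono1[OF mult_le_mono1[OF rK, of k], of K] by (simp add: algebra_simps)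
      have "K \<le> c" "K * K \<le> c" "4 * K * K \<le> 4 * c" using a1 a2 a3 by linarith+
      then show ?thesis using b1 b2 b3 a3 by linarith
    qed
    finally show ?thesis by simp
  qed
  have rest: "Tot k r - K * B5 k r \<le> 112 * c"
  proof -
    have "Tot k r = K * B5 k r + (76 + 6 * r + 10 * p + 5 * K + (3 * r - 2) * 5)"
      unfolding Tot_def K_def p_def by simp
    moreover have "(3 * r - 2) * 5 \<le> 15 * r" by simp
    moreover have "r \<le> c" using rK Kp pc by linarith
    moreover have "K \<le> c" using Kp pc by linarith
    ultimately show ?thesis using pc c1 by linarith
  qed
  have "Tot k r \<le> 233 * c" using KB rest by linarith
  then show ?thesis unfolding c_def p_def by (simp add: power2_eq_square)
qed


lemma k1_run:
  assumes m: "m 0 = 1"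
  shows "reach prog (0, m) (\<lambda>s. halted prog s \<and> snd s 0 = 1) (Suc (Suc (Suc 0)))"
  apply ((rule reach_step | rule reach_step_num), simp add: step_simps m prog_1S)+
  apply (rule reach_now)
  apply (simp add: step_simps)
  done

lemma acu_k1:
  assumes s: "simple_lqca 1 q N \<delta>"
  shows "all_columns_unit 1 q N \<delta>"
proof -
  have lq: "lqca 1 q N \<delta>" using s unfolding simple_lqca_def by auto
  have q0: "q = 0" using lq unfolding lqca_def by auto
  have r1: "length N \<ge> 1" using lq unfolding lqca_def by (cases N) auto
  have rep: "fw 1 \<delta> (replicate (length N) q) = 1" by (rule fw_rep[OF lq])
  show ?thesis
    unfolding acu_iff[OF s]
  proof
    fix w assume w: "w \<in> words 1 (length N)"
    have wr: "w = replicate (length N) q" using w q0 unfolding words_def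
      by (auto intro: replicate_eqI)
    have sw: "sw q (length N) w = replicate (3 * length N - 2) q" unfolding wr by (rule sw_rep[OF r1])
    have "(\<Prod>j<2 * length N - 1. fw 1 \<delta> (take (length N) (drop j (sw q (length N) w)))) = (\<Prod>j<2 * length N - 1. 1)"
    proof (rule prod.cong[OF refl])
      fix j assume "j \<in> {..<2 * length N - 1}"
      then have "length N \<le> 3 * length N - 2 - j" using r1 by auto
      then have "take (length N) (drop j (sw q (length N) w)) = replicate (length N) q"
        unfolding sw by (simp add: min_def)
      then show "fw 1 \<delta> (take (length N) (drop j (sw q (length N) w))) = 1" using rep by simp
    qed
    then show "(\<Prod>j<2 * length N - 1. fw 1 \<delta> (take (length N) (drop j (sw q (length N) w)))) = 1" by simp
  qed
qed

lemma chk_iff: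
  assumes k: "k > 0"
  shows "(\<forall>n<k ^ r. chk k q r \<delta> n) \<longleftrightarrow>
    (\<forall>w\<in>words k r. (\<Prod>j<2 * r - 1. fw k \<delta> (take r (drop j (sw q r w)))) = 1)"
proof
  assume a: "\<forall>n<k ^ r. chk k q r \<delta> n"
  show "\<forall>w\<in>words k r. (\<Prod>j<2 * r - 1. fw k \<delta> (take r (drop j (sw q r w)))) = 1"
  proof
    fix w assume w: "w \<in> words k r"
    have "chk k q r \<delta> (word_index k w)" using a word_index_bound[OF w] by simp
    then show "(\<Prod>j<2 * r - 1. fw k \<delta> (take r (drop j (sw q r w)))) = 1"
      unfolding chk_def digits_word_index[OF w] .
  qed
next
  assume a: "\<forall>w\<in>words k r. (\<Prod>j<2 * r - 1. fw k \<delta> (take r (drop j (sw q r w)))) = 1"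
  show "\<forall>n<k ^ r. chk k q r \<delta> n"
    unfolding chk_def using a digits_words[OF k] by blast
qed

theorem theorem4_dev:
  "\<exists>(P :: instr list) (C :: nat).
     \<forall>k q (N :: int list) (\<delta> :: nat list \<Rightarrow> nat \<Rightarrow> complex).
       simple_lqca k q N \<delta> \<longrightarrow>
       (\<exists>t \<le> C * (k ^ (length N + 1))\<^sup>2.
          halted P (run P (0, init_mem k q N \<delta>) t) \<and>
          snd (run P (0, init_mem k q N \<delta>) t) 0 = (if all_columns_unit k q N \<delta> then 1 else 0))"
proof (rule exI[of _ prog], rule exI[of _ 300], intro allI impI)
  fix k q N \<delta> assume s: "simple_lqca k q N \<delta>"
  have lq: "lqca k q N \<delta>" using s unfolding simple_lqca_def by auto
  have k0: "k > 0" using lq unfolding lqca_def by auto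
  have r1: "length N \<ge> 1" using lq unfolding lqca_def by (cases N) auto
  show "\<exists>t \<le> 300 * (k ^ (length N + 1))\<^sup>2.
          halted prog (run prog (0, init_mem k q N \<delta>) t) \<and>
          snd (run prog (0, init_mem k q N \<delta>) t) 0 = (if all_columns_unit k q N \<delta> then 1 else 0)"
  proof (cases "k = 1")
    case True
    have m: "init_mem k q N \<delta> 0 = 1" using init_regs(1)[of N "length N" k q \<delta>] True by simp
    obtain t where t: "t \<le> 3" "halted prog (run prog (0, init_mem k q N \<delta>) t)"
      "snd (run prog (0, init_mem k q N \<delta>) t) 0 = 1"
      using k1_run[of "init_mem k q N \<delta>", OF m] unfolding reach_def by (auto simp: numeral_eq_Suc)
    have acu: "all_columns_unit k q N \<delta>" using acu_k1 s True by simp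
    show ?thesis using t acu True by (intro exI[of _ t]) simp
  next
    case False
    then have k2: "k \<ge> 2" using k0 by simp
    obtain t where t: "t \<le> Tot k (length N)" "Fin k q (length N) \<delta> (run prog (0, init_mem k q N \<delta>) t)"
      using run_main[OF s k2] unfolding reach_def by auto
    have tb: "t \<le> 300 * (k ^ (length N + 1))\<^sup>2" using t(1) Tot_bound[OF k2 r1] by simp
    have eq: "(\<forall>n<k ^ length N. chk k q (length N) \<delta> n) \<longleftrightarrow> all_columns_unit k q N \<delta>"
      unfolding acu_iff[OF s] chk_iff[OF k0] ..
    show ?thesis using t(2) tb eq unfolding Fin_def by (intro exI[of _ t]) simp
  qed
qed


theorem theorem4:
  "\<exists>(P :: instr list) (C :: nat).
     \<forall>k q (N :: int list) (\<delta> :: nat list \<Rightarrow> nat \<Rightarrow> complex).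
       simple_lqca k q N \<delta> \<longrightarrow>
       (\<exists>t \<le> C * (k ^ (length N + 1))\<^sup>2.
          halted P (run P (0, init_mem k q N \<delta>) t) \<and>
          snd (run P (0, init_mem k q N \<delta>) t) 0 = (if all_columns_unit k q N \<delta> then 1 else 0))"
    by (rule theorem4_dev)

end
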